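(* Let $\mathcal{H}_X,\mathcal{H}_Z,\mathcal{H}_A$ be finite-dimensional Hilbert spaces with $d_A=\dim\mathcal{H}_A$, and let $\mathcal{S}:\mathrm{CPTP}(\mathcal{H}_X,\mathcal{H}_Z\otimes\mathcal{H}_A)\to\mathrm{CPTP}(\mathcal{H}_X,\mathcal{H}_Z)$ be the partial-trace supermap $\mathcal{S}(\mathcal{N})=\mathrm{Tr}_A\circ\mathcal{N}$. Let $\Gamma\in\mathrm{CPTP}(\mathcal{H}_X,\mathcal{H}_Z\otimes\mathcal{H}_A)$ be such that the Choi operators $C_\Gamma$ and $C_{\mathcal{S}(\Gamma)}$ are full-rank (invertible). Let $\mathcal{R}:\mathrm{CPTP}(\mathcal{H}_X,\mathcal{H}_Z)\to\mathrm{CPTP}(\mathcal{H}_{X_{\rm r}},\mathcal{H}_{Z_{\rm r}}\otimes\mathcal{H}_{A_{\rm r}})$ be a superchannel, where $X_{\rm r},Z_{\rm r},A_{\rm r}$ are copies of $X,Z,A$, and suppose $\mathcal{R}(\mathcal{S}(\Gamma))=\Gamma$. Then there exist a finite-dimensional Hilbert space $\mathcal{H}_R$ with $d_R:=\dim\mathcal{H}_R\geq d_A$ and an operator $V:\mathcal{H}_X\otimes\mathcal{H}_Z\otimes\mathcal{H}_R\to\mathcal{H}_{X_{\rm r}}\otimes\mathcal{H}_{Z_{\rm r}}\otimes\mathcal{H}_{A_{\rm r}}$ with $VV^\dagger=\mathbb{1}_{X_{\rm r}Z_{\rm r}A_{\rm r}}$ (i.e. $V^\dagger$ is an isometry) such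 that for every operator $\tau$ on $\mathcal{H}_X\otimes\mathcal{H}_Z$, $$\mathcal{C}_{\mathcal{R}}(\tau)=C_\Gamma^{1/2}\,V\left(C_{\mathcal{S}(\Gamma)}^{-1/2}\,\tau\,C_{\mathcal{S}(\Gamma)}^{-1/2}\otimes\mathbb{1}_R\right)V^\dagger\,C_\Gamma^{1/2},$$ where $C_\Gamma^{1/2}$ is regarded as an operator on $\mathcal{H}_{X_{\rm r}}\otimes\mathcal{H}_{Z_{\rm r}}\otimes\mathcal{H}_{A_{\rm r}}$. Furthermore, if the rank of $\mathcal{R}$ equals $d_A$, then $d_R=d_A$ and $V$ is unitary.
   Context: $\mathrm{CPTP}(\mathcal{H},\mathcal{K})$ denotes the set of quantum channels (completely positive trace-preserving maps) from operators on $\mathcal{H}$ to operators on $\mathcal{K}$. The Choi operator of a linear map $\mathcal{N}$ from operators on $\mathcal{H}_{\rm in}$ (with orthonormal basis $\{|i\rangle\}$) to operators on $\mathcal{H}_{\rm out}$ is $C_{\mathcal{N}}=\sum_{i,j}|i\rangle\langle j|\otimes\mathcal{N}(|i\rangle\langle j|)$, an operator on $\mathcal{H}_{\rm in}\otimes\mathcal{H}_{\rm out}$. A superchannel (deterministic supermap) is a linear map on linear maps sending channels to channels that can be realized as $\mathcal{N}\mapsto\mathcal{E}_{\rm post}\circ(\mathcal{N}\otimes\mathcal{I}_M)\circ\mathcal{E}_{\rm pre}$ for some ancilla system $M$ and channels $\mathcal{E}_{\rm pre},\mathcal{E}_{\rm post}$; equivalently it induces a completely positive linear map $\mathcal{C}_{\mathcal{R}}$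 on Choi operators defined by $\mathcal{C}_{\mathcal{R}}(C_{\mathcal{N}})=C_{\mathcal{R}(\mathcal{N})}$ (extended linearly to all operators on $\mathcal{H}_X\otimes\mathcal{H}_Z$). The rank of a supermap $\mathcal{R}$ is the rank of its Choi operator, which equals the Kraus rank of $\mathcal{C}_{\mathcal{R}}$. *)

theory Defs
  imports "Jordan_Normal_Form.Schur_Decomposition" "Jordan_Normal_Form.DL_Rank"
begin

text \<open>Finite-dimensional Hilbert spaces are modelled as C^d; operators as complex
  matrices (Jordan_Normal_Form).  The tensor product C^a (x) C^b is C^(a*b) with
  basis index i*b + j for |i> (x) |j>.  Linear maps on operators are HOL functions
  complex mat => complex mat, only their behaviour on the relevant carrier matters.\<close>

definition kron :: "complex mat \<Rightarrow> complex mat \<Rightarrow> complex mat" where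
  "kron A B = mat (dim_row A * dim_row B) (dim_col A * dim_col B)
     (\<lambda>(i,j). A $$ (i div dim_row B, j div dim_col B) * B $$ (i mod dim_row B, j mod dim_col B))"

definition adj :: "complex mat \<Rightarrow> complex mat" where
  "adj A = mat_adjoint A"

definition mtrace :: "complex mat \<Rightarrow> complex" where
  "mtrace A = (\<Sum>i<dim_row A. A $$ (i,i))"

definition psd :: "nat \<Rightarrow> complex mat \<Rightarrow> bool" where
  "psd n A \<longleftrightarrow> A \<in> carrier_mat n n \<and>
     (\<forall>v \<in> carrier_vec n. Im (conjugate v \<bullet> (A *\<^sub>v v)) = 0 \<and> Re (conjugate v \<bullet> (A *\<^sub>v v)) \<ge> 0)"

definition mat_sqrt :: "nat \<Rightarrow> complex mat \<Rightarrow> complex mat" where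
  "mat_sqrt n A = (THE B. psd n B \<and> B * B = A)"

definition mat_inv :: "nat \<Rightarrow> complex mat \<Rightarrow> complex mat" where
  "mat_inv n A = (THE B. B \<in> carrier_mat n n \<and> A * B = 1\<^sub>m n \<and> B * A = 1\<^sub>m n)"

definition munit :: "nat \<Rightarrow> nat \<Rightarrow> nat \<Rightarrow> complex mat" where
  "munit n a b = mat n n (\<lambda>(i,j). if i = a \<and> j = b then 1 else 0)"

definition lin_map :: "nat \<Rightarrow> nat \<Rightarrow> (complex mat \<Rightarrow> complex mat) \<Rightarrow> bool" where
  "lin_map n m N \<longleftrightarrow>
     (\<forall>A \<in> carrier_mat n n. N A \<in> carrier_mat m m) \<and>
     (\<forall>A \<in> carrier_mat n n. \<forall>B \<in> carrier_mat n n. N (A + B) = N A + N B) \<and>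
     (\<forall>c. \<forall>A \<in> carrier_mat n n. N (c \<cdot>\<^sub>m A) = c \<cdot>\<^sub>m N A)"

text \<open>(N (x) id_M) for N : L(C^n) -> L(C^m), acting on L(C^n (x) C^k), system first.\<close>
definition tensor_id :: "nat \<Rightarrow> nat \<Rightarrow> nat \<Rightarrow> (complex mat \<Rightarrow> complex mat) \<Rightarrow> complex mat \<Rightarrow> complex mat" where
  "tensor_id n m k N X = mat (m * k) (m * k)
     (\<lambda>(r,s). N (mat n n (\<lambda>(i,j). X $$ (i * k + r mod k, j * k + s mod k))) $$ (r div k, s div k))"

text \<open>(id_k (x) N), ancilla first, acting on L(C^k (x) C^n).\<close>
definition id_tensor :: "nat \<Rightarrow> nat \<Rightarrow> nat \<Rightarrow> (complex mat \<Rightarrow> complex mat) \<Rightarrow> complex mat \<Rightarrow> complex mat" where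
  "id_tensor k n m N X = mat (k * m) (k * m)
     (\<lambda>(r,s). N (mat n n (\<lambda>(i,j). X $$ ((r div m) * n + i, (s div m) * n + j))) $$ (r mod m, s mod m))"

definition completely_positive :: "nat \<Rightarrow> nat \<Rightarrow> (complex mat \<Rightarrow> complex mat) \<Rightarrow> bool" where
  "completely_positive n m N \<longleftrightarrow>
     (\<forall>k X. psd (k * n) X \<longrightarrow> psd (k * m) (id_tensor k n m N X))"

definition trace_preserving :: "nat \<Rightarrow> (complex mat \<Rightarrow> complex mat) \<Rightarrow> bool" where
  "trace_preserving n N \<longleftrightarrow> (\<forall>A \<in> carrier_mat n n. mtrace (N A) = mtrace A)"

definition CPTP :: "nat \<Rightarrow> nat \<Rightarrow> (complex mat \<Rightarrow> complex mat) \<Rightarrow> bool" where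
  "CPTP n m N \<longleftrightarrow> lin_map n m N \<and> completely_positive n m N \<and> trace_preserving n N"

text \<open>Choi operator C_N = sum_{ij} |i><j| (x) N(|i><j|), on C^n (x) C^m.\<close>
definition choi :: "nat \<Rightarrow> nat \<Rightarrow> (complex mat \<Rightarrow> complex mat) \<Rightarrow> complex mat" where
  "choi n m N = mat (n * m) (n * m) (\<lambda>(r,s). N (munit n (r div m) (s div m)) $$ (r mod m, s mod m))"

text \<open>The unique linear map L(C^n) -> L(C^m) whose Choi operator is T.\<close>
definition choi_inv :: "nat \<Rightarrow> nat \<Rightarrow> complex mat \<Rightarrow> complex mat \<Rightarrow> complex mat" where
  "choi_inv n m T A = mat m m (\<lambda>(r,s). \<Sum>i<n. \<Sum>j<n. A $$ (i,j) * T $$ (i * m + r, j * m + s))"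

definition ptrace2 :: "nat \<Rightarrow> nat \<Rightarrow> complex mat \<Rightarrow> complex mat" where
  "ptrace2 a b X = mat a a (\<lambda>(i,j). \<Sum>k<b. X $$ (i * b + k, j * b + k))"

definition superchannel :: "nat \<Rightarrow> nat \<Rightarrow> nat \<Rightarrow> nat \<Rightarrow>
    ((complex mat \<Rightarrow> complex mat) \<Rightarrow> (complex mat \<Rightarrow> complex mat)) \<Rightarrow> bool" where
  "superchannel dX dZ dX' dZ' R \<longleftrightarrow>
     (\<exists>dM Epre Epost. CPTP dX' (dX * dM) Epre \<and> CPTP (dZ * dM) dZ' Epost \<and>
        (\<forall>N. lin_map dX dZ N \<longrightarrow>
           (\<forall>A \<in> carrier_mat dX' dX'. R N A = Epost (tensor_id dX dZ dM N (Epre A)))))"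

text \<open>Induced map on Choi operators: C_R(C_N) = C_{R(N)}, extended linearly.\<close>
definition choi_supermap :: "nat \<Rightarrow> nat \<Rightarrow> nat \<Rightarrow> nat \<Rightarrow>
    ((complex mat \<Rightarrow> complex mat) \<Rightarrow> (complex mat \<Rightarrow> complex mat)) \<Rightarrow> complex mat \<Rightarrow> complex mat" where
  "choi_supermap dX dZ dX' dZ' R T = choi dX' dZ' (R (choi_inv dX dZ T))"

definition supermap_rank :: "nat \<Rightarrow> nat \<Rightarrow> nat \<Rightarrow> nat \<Rightarrow>
    ((complex mat \<Rightarrow> complex mat) \<Rightarrow> (complex mat \<Rightarrow> complex mat)) \<Rightarrow> nat" where
  "supermap_rank dX dZ dX' dZ' R =
     vec_space.rank ((dX * dZ) * (dX' * dZ'))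
       (choi (dX * dZ) (dX' * dZ') (choi_supermap dX dZ dX' dZ' R) :: complex mat)"

end

theory Submission
  imports Defs
begin


lemma adj_dims[simp]: "dim_row (adj A) = dim_col A" "dim_col (adj A) = dim_row A"
  by (auto simp: adj_def mat_adjoint_def)

lemma adj_index[simp]: "i < dim_col A \<Longrightarrow> j < dim_row A \<Longrightarrow> adj A $$ (i,j) = cnj (A $$ (j,i))"
  by (auto simp: adj_def mat_adjoint_def mat_of_rows_def cols_def)

lemma adj_carrier[simp]: "A \<in> carrier_mat n m \<Longrightarrow> adj A \<in> carrier_mat m n"
  unfolding carrier_mat_def by simp

lemma adj_adj[simp]: "adj (adj A) = A"
  by (rule eq_matI, auto)

lemma adj_mult: "A \<in> carrier_mat n m \<Longrightarrow> B \<in> carrier_mat m k \<Longrightarrow> adj (A * B) = adj B * adj A"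
  by (rule eq_matI) (simp_all add: scalar_prod_def mult.commute)

lemma adj_one[simp]: "adj (1\<^sub>m n) = 1\<^sub>m n"
  by (rule eq_matI, auto)

lemma adj_add: "A \<in> carrier_mat n m \<Longrightarrow> B \<in> carrier_mat n m \<Longrightarrow> adj (A + B) = adj A + adj B"
  by (rule eq_matI, auto)

lemma adj_smult: "adj (c \<cdot>\<^sub>m A) = cnj c \<cdot>\<^sub>m adj A"
  by (rule eq_matI, auto)

lemma adj_minus: "A \<in> carrier_mat n m \<Longrightarrow> B \<in> carrier_mat n m \<Longrightarrow> adj (A - B) = adj A - adj B"
  by (rule eq_matI, auto)

lemma unitary_completion:
  fixes v :: "complex vec"
  assumes v: "v \<in> carrier_vec n" and v0: "v \<noteq> 0\<^sub>v n"
  shows "\<exists>W c. W \<in> carrier_mat n n \<and> adj W * W = 1\<^sub>m n \<and> W * adj W = 1\<^sub>m n \<and> c \<noteq> 0 \<and> col W 0 = c \<cdot>\<^sub>v v"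
proof -
  interpret cof_vec_space n "TYPE(complex)" .
  define b where "b = basis_completion v"
  from basis_completion[OF v v0, folded b_def]
  have b: "set b \<subseteq> carrier_vec n" and dist_b: "distinct b" 
    and indep: "\<not> lin_dep (set b)" and hdb: "hd b = v" 
    and len_b: "length b = n" by auto
  have n0: "n \<noteq> 0" using v0 v len_b hdb by (cases b) auto
  from hdb len_b n0 obtain vs where bv: "b = v # vs" by (cases b, auto)
  define ws where "ws = gram_schmidt n b"
  from gram_schmidt_result[OF b dist_b indep refl, folded ws_def]
  have ws: "set ws \<subseteq> carrier_vec n" "corthogonal ws" "length ws = n" 
    by (auto simp: len_b)
  from gram_schmidt_hd[OF v, of vs, folded bv] have hdws: "hd ws = v" unfolding ws_def .
  define nr where "nr = (\<lambda>w::complex vec. sqrt (Re (w \<bullet>c w)))"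
  define ws' where "ws' = map (\<lambda>w. complex_of_real (1 / nr w) \<cdot>\<^sub>v w) ws"
  define W where "W = mat_of_cols n ws'"
  have len': "length ws' = n" using ws by (simp add: ws'_def)
  have ws'_i: "ws' ! i = complex_of_real (1 / nr (ws ! i)) \<cdot>\<^sub>v (ws ! i)" if "i < n" for i
    using that ws by (simp add: ws'_def)
  have wsc: "ws ! i \<in> carrier_vec n" if "i < n" for i using ws that by auto
  have pos: "Re (ws ! i \<bullet>c ws ! i) > 0" "Im (ws ! i \<bullet>c ws ! i) = 0" if "i < n" for i
  proof -
    have "ws ! i \<bullet>c ws ! i \<noteq> 0" using corthogonalD[OF ws(2), of i i] that ws by auto
    hence "ws ! i \<noteq> 0\<^sub>v n" using that wsc by auto
    from conjugate_square_greater_0_vec[of "ws ! i"] this wsc[OF that]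
    have "ws ! i \<bullet>c ws ! i > 0" by (auto)
    thus "Re (ws ! i \<bullet>c ws ! i) > 0" "Im (ws ! i \<bullet>c ws ! i) = 0" by (auto simp: less_complex_def)
  qed
  have W: "W \<in> carrier_mat n n" unfolding W_def using len' by auto
  have Wij: "W $$ (i,j) = complex_of_real (1 / nr (ws ! j)) * (ws ! j) $ i" if "i < n" "j < n" for i j
    unfolding W_def using that len' wsc[OF that(2)] by (simp add: mat_of_cols_def ws'_i)
  have "adj W * W = 1\<^sub>m n"
  proof (rule eq_matI)
    fix i j assume ij: "i < dim_row (1\<^sub>m n)" "j < dim_col (1\<^sub>m n)"
    hence ij: "i < n" "j < n" by auto
    have "(adj W * W) $$ (i,j) = (\<Sum>k<n. cnj (W $$ (k,i)) * W $$ (k,j))"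
      using W ij by (simp add: scalar_prod_def atLeast0LessThan)
    also have "\<dots> = complex_of_real (1 / nr (ws ! i)) * complex_of_real (1 / nr (ws ! j)) * (ws ! j \<bullet>c ws ! i)"
      using ij wsc[OF ij(1)] wsc[OF ij(2)]
      by (simp add: Wij scalar_prod_def sum_distrib_left atLeast0LessThan mult_ac)
    also have "\<dots> = 1\<^sub>m n $$ (i,j)"
    proof (cases "i = j")
      case True
      have "nr (ws ! i) > 0" using pos[OF ij(1)] by (simp add: nr_def)
      moreover have "ws ! i \<bullet>c ws ! i = complex_of_real (nr (ws ! i))^2"
        using pos[OF ij(1)] unfolding nr_def
        by (simp add: complex_eq_iff power2_eq_square)
      ultimately show ?thesis using True ij
        by (simp add: field_simps power2_eq_square)
    next
      case False
      hence "ws ! j \<bullet>c ws ! i = 0" using corthogonalD[OF ws(2), of j i] ij ws by auto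
      thus ?thesis using False ij by simp
    qed
    finally show "(adj W * W) $$ (i,j) = 1\<^sub>m n $$ (i,j)" .
  qed (use W in auto)
  moreover have "W * adj W = 1\<^sub>m n"
    using mat_mult_left_right_inverse[OF _ W calculation] W by auto
  moreover have "col W 0 = complex_of_real (1 / nr v) \<cdot>\<^sub>v v"
  proof -
    have "ws ! 0 = v" using hdws ws n0 by (cases ws) auto
    moreover have "ws' ! 0 \<in> carrier_vec n" using n0 ws'_i[of 0] wsc[of 0] by simp
    ultimately show ?thesis unfolding W_def using n0 len' ws'_i[of 0] by (simp add: col_mat_of_cols)
  qed
  moreover have "complex_of_real (1 / nr v) \<noteq> 0"
    using pos[of 0] n0 hdws ws by (cases ws) (auto simp: nr_def)
  ultimately show ?thesis using W by blast
qed



definition diagm :: "nat \<Rightarrow> (nat \<Rightarrow> real) \<Rightarrow> complex mat" where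
  "diagm n d = mat n n (\<lambda>(i,j). if i = j then complex_of_real (d i) else 0)"

lemma diagm_carrier[simp]: "diagm n d \<in> carrier_mat n n" by (simp add: diagm_def)

lemma sq_mult[simp]: "A \<in> carrier_mat n n \<Longrightarrow> B \<in> carrier_mat n n \<Longrightarrow> A * B \<in> carrier_mat n n"
  by (rule mult_carrier_mat)

lemma sq_one1[simp]: "(A::complex mat) \<in> carrier_mat n n \<Longrightarrow> 1\<^sub>m n * A = A" by (rule left_mult_one_mat)
lemma sq_one2[simp]: "(A::complex mat) \<in> carrier_mat n n \<Longrightarrow> A * 1\<^sub>m n = A" by (rule right_mult_one_mat)

lemma diagm_dims[simp]: "dim_row (diagm n d) = n" "dim_col (diagm n d) = n"
  by (simp_all add: diagm_def)

lemma mult_index: "A \<in> carrier_mat n m \<Longrightarrow> B \<in> carrier_mat m k \<Longrightarrow> i < n \<Longrightarrow> j < k \<Longrightarrow>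
  (A * B) $$ (i,j) = (\<Sum>l<m. A $$ (i,l) * B $$ (l,j))"
  by (simp add: scalar_prod_def atLeast0LessThan)

lemma udu_index:
  assumes U: "U \<in> carrier_mat n n" and i: "i < n" and j: "j < n"
  shows "(U * diagm n d * adj U) $$ (i,j) = (\<Sum>k<n. U $$ (i,k) * complex_of_real (d k) * cnj (U $$ (j,k)))"
proof -
  have "(U * diagm n d * adj U) $$ (i,j) = (\<Sum>l<n. (U * diagm n d) $$ (i,l) * adj U $$ (l,j))"
    using U i j by (intro mult_index) auto
  also have "\<dots> = (\<Sum>l<n. U $$ (i,l) * complex_of_real (d l) * cnj (U $$ (j,l)))"
  proof (rule sum.cong[OF refl])
    fix l assume l: "l \<in> {..<n}"
    have "(U * diagm n d) $$ (i,l) = (\<Sum>k<n. U $$ (i,k) * diagm n d $$ (k,l))"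
      using U i l by (intro mult_index) auto
    also have "\<dots> = (\<Sum>k<n. if k = l then U $$ (i,l) * complex_of_real (d l) else 0)"
      using l by (intro sum.cong) (auto simp: diagm_def)
    also have "\<dots> = U $$ (i,l) * complex_of_real (d l)" using l by simp
    finally show "(U * diagm n d) $$ (i,l) * adj U $$ (l,j) = U $$ (i,l) * complex_of_real (d l) * cnj (U $$ (j,l))"
      using U l j by simp
  qed
  finally show ?thesis .
qed

lemma complex_eigenvalue_exists:
  fixes A :: "complex mat"
  assumes A: "A \<in> carrier_mat n n" and n: "n > 0"
  shows "\<exists>e v. v \<in> carrier_vec n \<and> v \<noteq> 0\<^sub>v n \<and> A *\<^sub>v v = e \<cdot>\<^sub>v v"
proof -
  have "degree (char_poly A) = n" using degree_monic_char_poly[OF A] by simp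
  hence "\<not> constant (poly (char_poly A))" using n by (simp add: constant_degree)
  from fundamental_theorem_of_algebra[OF this] obtain e where "poly (char_poly A) e = 0" by blast
  hence "eigenvalue A e" using eigenvalue_root_char_poly[OF A] by simp
  then obtain v where "eigenvector A v e" unfolding eigenvalue_def by blast
  thus ?thesis using A unfolding eigenvector_def by auto
qed

lemma spectral:
  fixes A :: "complex mat"
  assumes "A \<in> carrier_mat n n" "adj A = A"
  shows "\<exists>U d. U \<in> carrier_mat n n \<and> adj U * U = 1\<^sub>m n \<and> U * adj U = 1\<^sub>m n \<and> A = U * diagm n d * adj U"
  using assms
proof (induction n arbitrary: A)
  case 0
  show ?case
    by (rule exI[of _ "1\<^sub>m 0"], rule exI[of _ "\<lambda>_. 0"]) (use 0 in \<open>auto intro: eq_matI\<close>)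
next
  case (Suc n)
  have A: "A \<in> carrier_mat (Suc n) (Suc n)" and hA: "adj A = A" by fact+
  obtain e v where v: "v \<in> carrier_vec (Suc n)" "v \<noteq> 0\<^sub>v (Suc n)" and ev: "A *\<^sub>v v = e \<cdot>\<^sub>v v"
    using complex_eigenvalue_exists[OF A] by auto
  obtain W c where W: "W \<in> carrier_mat (Suc n) (Suc n)" and WW: "adj W * W = 1\<^sub>m (Suc n)" 
    and WW': "W * adj W = 1\<^sub>m (Suc n)" and c: "col W 0 = c \<cdot>\<^sub>v v"
    using unitary_completion[OF v] by blast
  define A' where "A' = adj W * A * W"
  have A': "A' \<in> carrier_mat (Suc n) (Suc n)" using A W by (simp add: A'_def)
  note sq = assoc_mult_mat[of _ "Suc n" "Suc n" _ "Suc n" _ "Suc n"] adj_mult[of _ "Suc n" "Suc n" _ "Suc n"]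
  have hA': "adj A' = A'" unfolding A'_def using A W hA
    by (simp add: sq)
  have colAW: "col (A * W) 0 = e \<cdot>\<^sub>v col W 0"
  proof -
    have "col (A * W) 0 = A *\<^sub>v col W 0" by (rule col_mult2[OF A W]) simp
    also have "\<dots> = A *\<^sub>v (c \<cdot>\<^sub>v v)" by (simp only: c)
    also have "\<dots> = c \<cdot>\<^sub>v (A *\<^sub>v v)" by (rule mult_mat_vec[OF A v(1)])
    also have "\<dots> = c \<cdot>\<^sub>v (e \<cdot>\<^sub>v v)" by (simp only: ev)
    also have "\<dots> = e \<cdot>\<^sub>v (c \<cdot>\<^sub>v v)" by (simp only: smult_smult_assoc mult.commute)
    also have "\<dots> = e \<cdot>\<^sub>v col W 0" by (simp only: c)
    finally show ?thesis .
  qed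
  have A'0: "A' $$ (i,0) = (if i = 0 then e else 0)" if i: "i < Suc n" for i
  proof -
    have "A' $$ (i,0) = row (adj W) i \<bullet> col (A * W) 0"
      unfolding A'_def using A W i by (simp add: sq del: col_mult2)
    also have "\<dots> = e * (row (adj W) i \<bullet> col W 0)"
      unfolding colAW using W i by (simp add: scalar_prod_smult_right)
    also have "row (adj W) i \<bullet> col W 0 = (adj W * W) $$ (i,0)" using W i by simp
    also have "\<dots> = (if i = 0 then 1 else 0)" using WW i by simp
    finally show ?thesis by simp
  qed
  have ereal: "cnj e = e"
  proof -
    have "adj A' $$ (0,0) = cnj (A' $$ (0,0))" using A' by simp
    thus ?thesis using hA' A'0[of 0] by simp
  qed
  have A'0': "A' $$ (0,j) = (if j = 0 then e else 0)" if j: "j < Suc n" for j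
  proof -
    have "A' $$ (0,j) = adj A' $$ (0,j)" using hA' by simp
    also have "\<dots> = cnj (A' $$ (j,0))" using A' j by simp
    finally show ?thesis using A'0[OF j] ereal by simp
  qed
  define A3 where "A3 = mat n n (\<lambda>(i,j). A' $$ (Suc i, Suc j))"
  have A3: "A3 \<in> carrier_mat n n" by (simp add: A3_def)
  have hA3: "adj A3 = A3"
  proof (rule eq_matI)
    fix i j assume "i < dim_row A3" "j < dim_col A3"
    hence ij: "i < n" "j < n" by (auto simp: A3_def)
    have "adj A3 $$ (i,j) = cnj (A' $$ (Suc j, Suc i))" using ij by (simp add: A3_def)
    also have "\<dots> = adj A' $$ (Suc i, Suc j)" using A' ij by simp
    also have "\<dots> = A3 $$ (i,j)" using hA' ij by (simp add: A3_def)
    finally show "adj A3 $$ (i,j) = A3 $$ (i,j)" .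
  qed (auto simp: A3_def)
  from Suc.IH[OF A3 hA3] obtain U3 d3 where U3: "U3 \<in> carrier_mat n n" and U3U3: "adj U3 * U3 = 1\<^sub>m n"
    and U3U3': "U3 * adj U3 = 1\<^sub>m n" and A3eq: "A3 = U3 * diagm n d3 * adj U3" by blast
  define B where "B = mat (Suc n) (Suc n) (\<lambda>(i,j). if i = 0 \<and> j = 0 then 1 else if i = 0 \<or> j = 0 then 0 else U3 $$ (i - 1, j - 1))"
  define d where "d = (\<lambda>i. if i = 0 then Re e else d3 (i - 1))"
  have B: "B \<in> carrier_mat (Suc n) (Suc n)" by (simp add: B_def)
  have B0: "B $$ (0, j) = (if j = 0 then 1 else 0)" "B $$ (j, 0) = (if j = 0 then 1 else 0)" if "j < Suc n" for j
    using that by (auto simp: B_def)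
  have BS: "B $$ (Suc i, Suc j) = U3 $$ (i, j)" if "i < n" "j < n" for i j
    using that by (auto simp: B_def)
  have BB: "adj B * B = 1\<^sub>m (Suc n)"
  proof (rule eq_matI)
    fix i j assume "i < dim_row (1\<^sub>m (Suc n))" "j < dim_col (1\<^sub>m (Suc n))"
    hence ij: "i < Suc n" "j < Suc n" by auto
    have "(adj B * B) $$ (i,j) = (\<Sum>k<Suc n. cnj (B $$ (k,i)) * B $$ (k,j))"
      using B ij by (subst mult_index[of _ "Suc n" "Suc n" _ "Suc n"]) auto
    also have "\<dots> = cnj (B $$ (0,i)) * B $$ (0,j) + (\<Sum>k<n. cnj (B $$ (Suc k,i)) * B $$ (Suc k,j))"
      by (rule sum.lessThan_Suc_shift)
    also have "\<dots> = 1\<^sub>m (Suc n) $$ (i,j)"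
    proof (cases i)
      case 0 thus ?thesis using ij B0 by (cases j) auto
    next
      case (Suc i')
      show ?thesis
      proof (cases j)
        case 0 thus ?thesis using ij B0 Suc by auto
      next
        case (Suc j')
        have "(\<Sum>k<n. cnj (B $$ (Suc k,i)) * B $$ (Suc k,j)) = (\<Sum>k<n. cnj (U3 $$ (k,i')) * U3 $$ (k,j'))"
          using ij \<open>i = Suc i'\<close> Suc by (intro sum.cong) (auto simp: BS)
        also have "\<dots> = (adj U3 * U3) $$ (i',j')"
          using U3 ij \<open>i = Suc i'\<close> Suc by (subst mult_index[of _ n n _ n]) auto
        finally show ?thesis using U3U3 ij \<open>i = Suc i'\<close> Suc B0 by auto
      qed
    qed
    finally show "(adj B * B) $$ (i,j) = 1\<^sub>m (Suc n) $$ (i,j)" .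
  qed (use B in auto)
  have A'eq: "A' = B * diagm (Suc n) d * adj B"
  proof (rule eq_matI)
    fix i j assume "i < dim_row (B * diagm (Suc n) d * adj B)" "j < dim_col (B * diagm (Suc n) d * adj B)"
    hence ij: "i < Suc n" "j < Suc n" using B by auto
    have "(B * diagm (Suc n) d * adj B) $$ (i,j) = (\<Sum>k<Suc n. B $$ (i,k) * complex_of_real (d k) * cnj (B $$ (j,k)))"
      by (rule udu_index[OF B ij])
    also have "\<dots> = B $$ (i,0) * complex_of_real (d 0) * cnj (B $$ (j,0)) + (\<Sum>k<n. B $$ (i,Suc k) * complex_of_real (d (Suc k)) * cnj (B $$ (j,Suc k)))"
      by (rule sum.lessThan_Suc_shift)
    also have "\<dots> = A' $$ (i,j)"
    proof (cases i)
      case 0 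
      have "complex_of_real (Re e) = e" using ereal by (simp add: complex_eq_iff)
      thus ?thesis using ij B0 A'0' 0 d_def by (cases j) auto
    next
      case (Suc i')
      show ?thesis
      proof (cases j)
        case 0 thus ?thesis using ij B0 Suc A'0 by auto
      next
        case (Suc j')
        have "(\<Sum>k<n. B $$ (i,Suc k) * complex_of_real (d (Suc k)) * cnj (B $$ (j,Suc k))) = 
              (\<Sum>k<n. U3 $$ (i',k) * complex_of_real (d3 k) * cnj (U3 $$ (j',k)))"
          using ij \<open>i = Suc i'\<close> Suc by (intro sum.cong) (auto simp: BS d_def)
        also have "\<dots> = A3 $$ (i',j')" unfolding A3eq
          using U3 ij \<open>i = Suc i'\<close> Suc by (subst udu_index) auto
        also have "\<dots> = A' $$ (i,j)" using ij \<open>i = Suc i'\<close> Suc by (simp add: A3_def)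
        finally show ?thesis using ij \<open>i = Suc i'\<close> Suc B0 by auto
      qed
    qed
    finally show "A' $$ (i,j) = (B * diagm (Suc n) d * adj B) $$ (i,j)" ..
  qed (use A' B in auto)
  define U where "U = W * B"
  have U: "U \<in> carrier_mat (Suc n) (Suc n)" using W B by (simp add: U_def)
  have adjU: "adj U = adj B * adj W" using W B by (simp add: U_def adj_mult)
  have UU: "adj U * U = 1\<^sub>m (Suc n)"
  proof -
    have "adj U * U = adj B * (adj W * W) * B" unfolding adjU U_def
      using W B by (simp add: sq)
    also have "\<dots> = 1\<^sub>m (Suc n)" using WW BB B by simp
    finally show ?thesis .
  qed
  have UU': "U * adj U = 1\<^sub>m (Suc n)" using mat_mult_left_right_inverse[OF _ U UU] U by simp
  have "U * diagm (Suc n) d * adj U = W * A' * adj W"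
    unfolding A'eq adjU U_def using W B
    by (simp add: sq)
  also have "\<dots> = (W * adj W) * A * (W * adj W)" unfolding A'_def using W A
    by (simp add: sq)
  also have "\<dots> = A" using WW' A by simp
  finally show ?case using U UU UU' by metis
qed



lemma qf_expand:
  assumes A: "A \<in> carrier_mat n n" and v: "v \<in> carrier_vec n"
  shows "conjugate v \<bullet> (A *\<^sub>v v) = (\<Sum>i<n. \<Sum>j<n. cnj (v $ i) * A $$ (i,j) * v $ j)"
  using A v by (simp add: scalar_prod_def atLeast0LessThan sum_distrib_left mult_ac)

lemma complex_sq_nonneg: "z * cnj z = complex_of_real ((Re z)^2 + (Im z)^2)"
  by (simp add: complex_mult_cnj)

lemma cnj_sq_props: "Im (complex_of_real c * (w * cnj w)) = 0" "c \<ge> 0 \<Longrightarrow> Re (complex_of_real c * (w * cnj w)) \<ge> 0"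
  by (simp_all add: complex_mult_cnj del: of_real_add of_real_power)

lemma psd_gram:
  assumes A: "A \<in> carrier_mat n n" and K: "finite K" and c: "\<And>k. k \<in> K \<Longrightarrow> c k \<ge> 0"
    and Aij: "\<And>i j. i < n \<Longrightarrow> j < n \<Longrightarrow> A $$ (i,j) = (\<Sum>k\<in>K. complex_of_real (c k) * f k i * cnj (f k j))"
  shows "psd n A"
  unfolding psd_def
proof (intro conjI[OF A] ballI)
  fix v :: "complex vec" assume v: "v \<in> carrier_vec n"
  define w where "w k = (\<Sum>i<n. cnj (v $ i) * f k i)" for k
  define F where "F i j k = complex_of_real (c k) * (cnj (v $ i) * f k i) * cnj (cnj (v $ j) * f k j)" for i j k
  have "conjugate v \<bullet> (A *\<^sub>v v) = (\<Sum>i<n. \<Sum>j<n. cnj (v $ i) * A $$ (i,j) * v $ j)"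
    by (rule qf_expand[OF A v])
  also have "\<dots> = (\<Sum>i<n. \<Sum>j<n. \<Sum>k\<in>K. F i j k)"
    unfolding F_def by (intro sum.cong refl) (simp add: Aij sum_distrib_left sum_distrib_right mult_ac)
  also have "\<dots> = (\<Sum>i<n. \<Sum>k\<in>K. \<Sum>j<n. F i j k)"
    by (rule sum.cong[OF refl], rule sum.swap)
  also have "\<dots> = (\<Sum>k\<in>K. \<Sum>i<n. \<Sum>j<n. F i j k)"
    by (rule sum.swap)
  also have "\<dots> = (\<Sum>k\<in>K. complex_of_real (c k) * (w k * cnj (w k)))"
  proof (rule sum.cong[OF refl])
    fix k
    have "w k * cnj (w k) = (\<Sum>i<n. \<Sum>j<n. (cnj (v $ i) * f k i) * cnj (cnj (v $ j) * f k j))"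
      unfolding w_def cnj_sum by (rule sum_product)
    thus "(\<Sum>i<n. \<Sum>j<n. F i j k) = complex_of_real (c k) * (w k * cnj (w k))"
      unfolding F_def by (simp add: sum_distrib_left mult.assoc)
  qed
  finally have eq: "conjugate v \<bullet> (A *\<^sub>v v) = (\<Sum>k\<in>K. complex_of_real (c k) * (w k * cnj (w k)))" .
  show "Im (conjugate v \<bullet> (A *\<^sub>v v)) = 0 \<and> 0 \<le> Re (conjugate v \<bullet> (A *\<^sub>v v))"
    unfolding eq Im_sum Re_sum using cnj_sq_props c by (auto intro: sum_nonneg)
qed

definition tv :: "nat \<Rightarrow> nat \<Rightarrow> nat \<Rightarrow> complex \<Rightarrow> complex vec" where
  "tv n i j c = vec n (\<lambda>k. (if k = i then 1 else 0) + (if k = j then c else 0))"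

lemma qf_tv:
  assumes A: "A \<in> carrier_mat n n" and ij: "i < n" "j < n" "i \<noteq> j"
  shows "conjugate (tv n i j c) \<bullet> (A *\<^sub>v tv n i j c) = A $$ (i,i) + c * A $$ (i,j) + cnj c * A $$ (j,i) + cnj c * c * A $$ (j,j)"
proof -
  have v: "tv n i j c \<in> carrier_vec n" by (simp add: tv_def)
  have tvl: "tv n i j c $ l = (if l = i then 1 else 0) + (if l = j then c else 0)" if "l < n" for l
    using that by (simp add: tv_def)
  have inner: "(\<Sum>l<n. A $$ (k,l) * tv n i j c $ l) = A $$ (k,i) + c * A $$ (k,j)" for k
  proof -
    have "(\<Sum>l<n. A $$ (k,l) * tv n i j c $ l) = (\<Sum>l<n. (if l = i then A $$ (k,i) else 0) + (if l = j then c * A $$ (k,j) else 0))"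
      by (rule sum.cong[OF refl]) (use ij in \<open>auto simp: tvl\<close>)
    also have "\<dots> = A $$ (k,i) + c * A $$ (k,j)" using ij by (simp only: sum.distrib) simp
    finally show ?thesis .
  qed
  have "conjugate (tv n i j c) \<bullet> (A *\<^sub>v tv n i j c) = (\<Sum>k<n. cnj (tv n i j c $ k) * (\<Sum>l<n. A $$ (k,l) * tv n i j c $ l))"
    unfolding qf_expand[OF A v] by (simp add: sum_distrib_left mult_ac)
  also have "\<dots> = (\<Sum>k<n. cnj (tv n i j c $ k) * (A $$ (k,i) + c * A $$ (k,j)))" by (simp add: inner)
  also have "\<dots> = (\<Sum>k<n. (if k = i then A $$ (i,i) + c * A $$ (i,j) else 0) + (if k = j then cnj c * (A $$ (j,i) + c * A $$ (j,j)) else 0))"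
    by (rule sum.cong[OF refl]) (use ij in \<open>auto simp: tvl\<close>)
  also have "\<dots> = A $$ (i,i) + c * A $$ (i,j) + cnj c * A $$ (j,i) + cnj c * c * A $$ (j,j)"
    using ij by (simp only: sum.distrib) (simp add: algebra_simps)
  finally show ?thesis .
qed

lemma tv_carrier[simp]: "tv n i j c \<in> carrier_vec n" by (simp add: tv_def)

lemma qf_unit:
  fixes A :: "complex mat"
  assumes A: "A \<in> carrier_mat n n" and i: "i < n"
  shows "conjugate (unit_vec n i) \<bullet> (A *\<^sub>v unit_vec n i) = A $$ (i,i)"
proof -
  have v: "(unit_vec n i :: complex vec) \<in> carrier_vec n" by simp
  have "conjugate (unit_vec n i) \<bullet> (A *\<^sub>v unit_vec n i) = (\<Sum>k<n. \<Sum>l<n. (if k = i then (if l = i then A $$ (i,i) else 0) else 0))"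
    unfolding qf_expand[OF A v] by (intro sum.cong refl) (auto simp: unit_vec_def)
  also have "\<dots> = (\<Sum>k<n. if k = i then A $$ (i,i) else 0)"
    using i by (intro sum.cong refl) auto
  also have "\<dots> = A $$ (i,i)" using i by simp
  finally show ?thesis .
qed

lemma psd_herm:
  assumes "psd n A" shows "adj A = A"
proof -
  have A: "A \<in> carrier_mat n n" using assms by (simp add: psd_def)
  have q: "Im (conjugate v \<bullet> (A *\<^sub>v v)) = 0" if "v \<in> carrier_vec n" for v
    using assms that by (simp add: psd_def)
  have diag: "Im (A $$ (i,i)) = 0" if "i < n" for i
    using q[of "unit_vec n i"] qf_unit[OF A that] that by simp
  show ?thesis
  proof (rule eq_matI)
    fix i j assume "i < dim_row A" "j < dim_col A"
    hence ij: "i < n" "j < n" using A by auto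
    show "adj A $$ (i,j) = A $$ (i,j)"
    proof (cases "i = j")
      case True thus ?thesis using ij A diag[OF ij(1)] by (simp add: complex_eq_iff)
    next
      case False
      have F: "j \<noteq> i" using False by simp
      have 1: "Im (A $$ (j,j) + 1 * A $$ (j,i) + cnj 1 * A $$ (i,j) + cnj 1 * 1 * A $$ (i,i)) = 0"
        using q[OF tv_carrier, of j i 1] unfolding qf_tv[OF A ij(2) ij(1) F] .
      have 2: "Im (A $$ (j,j) + \<i> * A $$ (j,i) + cnj \<i> * A $$ (i,j) + cnj \<i> * \<i> * A $$ (i,i)) = 0"
        using q[OF tv_carrier, of j i \<i>] unfolding qf_tv[OF A ij(2) ij(1) F] .
      from 1 2 diag[OF ij(1)] diag[OF ij(2)] show ?thesis using ij A
        by (simp add: complex_eq_iff)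
    qed
  qed (use A in auto)
qed

lemma diag_mult_left: assumes M: "M \<in> carrier_mat n m" and i: "i < n" and j: "j < m"
  shows "(diagm n d * M) $$ (i,j) = complex_of_real (d i) * M $$ (i,j)"
proof -
  have "(diagm n d * M) $$ (i,j) = (\<Sum>l<n. diagm n d $$ (i,l) * M $$ (l,j))"
    using M i j by (intro mult_index) auto
  also have "\<dots> = (\<Sum>l<n. if l = i then complex_of_real (d i) * M $$ (i,j) else 0)"
    using i by (intro sum.cong refl) (auto simp: diagm_def)
  finally show ?thesis using i by simp
qed

lemma diag_mult_right: assumes M: "M \<in> carrier_mat m n" and i: "i < m" and j: "j < n"
  shows "(M * diagm n d) $$ (i,j) = M $$ (i,j) * complex_of_real (d j)"
proof -
  have "(M * diagm n d) $$ (i,j) = (\<Sum>l<n. M $$ (i,l) * diagm n d $$ (l,j))"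
    using M i j by (intro mult_index) auto
  also have "\<dots> = (\<Sum>l<n. if l = j then M $$ (i,j) * complex_of_real (d j) else 0)"
    using j by (intro sum.cong refl) (auto simp: diagm_def)
  finally show ?thesis using j by simp
qed

lemma diag_mult_diag: "diagm n a * diagm n b = diagm n (\<lambda>i. a i * b i)"
proof (rule eq_matI)
  fix i j assume "i < dim_row (diagm n (\<lambda>i. a i * b i))" "j < dim_col (diagm n (\<lambda>i. a i * b i))"
  hence ij: "i < n" "j < n" by (auto simp: diagm_def)
  show "(diagm n a * diagm n b) $$ (i, j) = diagm n (\<lambda>i. a i * b i) $$ (i, j)"
    unfolding diag_mult_left[OF diagm_carrier ij] using ij by (simp add: diagm_def)
qed (auto simp: diagm_def)

lemma psd_udu:
  assumes U: "U \<in> carrier_mat n n" and d: "\<And>k. k < n \<Longrightarrow> d k \<ge> 0"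
  shows "psd n (U * diagm n d * adj U)"
proof (rule psd_gram[where K="{..<n}" and c=d and f="\<lambda>k i. U $$ (i,k)"])
  fix i j assume ij: "i < n" "j < n"
  show "(U * diagm n d * adj U) $$ (i,j) = (\<Sum>k\<in>{..<n}. complex_of_real (d k) * U $$ (i,k) * cnj (U $$ (j,k)))"
    unfolding udu_index[OF U ij] by (simp add: mult_ac)
qed (use U d in auto)

lemma udu_nonneg:
  assumes psd: "psd n A" and U: "U \<in> carrier_mat n n" and UU: "adj U * U = 1\<^sub>m n" 
    and Aeq: "A = U * diagm n d * adj U" and k: "k < n"
  shows "d k \<ge> 0"
proof -
  have A: "A \<in> carrier_mat n n" using psd by (simp add: psd_def)
  note sq = assoc_mult_mat[of _ n n _ n _ n]
  have D: "adj U * A * U = diagm n d" unfolding Aeq using U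
    by (simp add: sq) (simp add: sq[symmetric] UU left_mult_one_mat[OF diagm_carrier] right_mult_one_mat[OF diagm_carrier])
  define v where "v = col U k"
  have v: "v \<in> carrier_vec n" using U unfolding v_def by (intro carrier_vecI) simp
  have "conjugate v \<bullet> (A *\<^sub>v v) = (\<Sum>i<n. \<Sum>j<n. cnj (U $$ (i,k)) * A $$ (i,j) * U $$ (j,k))"
    unfolding qf_expand[OF A v] using U k by (simp add: v_def)
  also have "\<dots> = (\<Sum>j<n. \<Sum>i<n. cnj (U $$ (i,k)) * A $$ (i,j) * U $$ (j,k))"
    by (rule sum.swap)
  also have "\<dots> = (\<Sum>j<n. (\<Sum>i<n. cnj (U $$ (i,k)) * A $$ (i,j)) * U $$ (j,k))"
    by (simp add: sum_distrib_right)
  also have "\<dots> = (\<Sum>j<n. (adj U * A) $$ (k,j) * U $$ (j,k))"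
    by (intro sum.cong refl, subst mult_index[of _ n n _ n]) (use U A k in auto)
  also have "\<dots> = (adj U * A * U) $$ (k,k)"
    by (rule mult_index[symmetric]) (use U A k in auto)
  also have "\<dots> = complex_of_real (d k)" using D k by (simp add: diagm_def)
  finally show ?thesis using psd v unfolding psd_def by auto
qed

lemma psd_spectral:
  assumes "psd n A"
  shows "\<exists>U d. U \<in> carrier_mat n n \<and> adj U * U = 1\<^sub>m n \<and> U * adj U = 1\<^sub>m n \<and> A = U * diagm n d * adj U \<and> (\<forall>k<n. d k \<ge> 0)"
proof -
  have A: "A \<in> carrier_mat n n" using assms by (simp add: psd_def)
  from spectral[OF A psd_herm[OF assms]] obtain U d where U: "U \<in> carrier_mat n n" "adj U * U = 1\<^sub>m n" "U * adj U = 1\<^sub>m n"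
    "A = U * diagm n d * adj U" by blast
  with udu_nonneg[OF assms U(1,2,4)] show ?thesis by blast
qed

lemma sqrt_exists:
  assumes "psd n A" shows "\<exists>S. psd n S \<and> S * S = A"
proof -
  from psd_spectral[OF assms] obtain U d where U: "U \<in> carrier_mat n n" "adj U * U = 1\<^sub>m n"
    and Aeq: "A = U * diagm n d * adj U" and d: "\<forall>k<n. d k \<ge> 0" by blast
  define S where "S = U * diagm n (\<lambda>k. sqrt (d k)) * adj U"
  note sq = assoc_mult_mat[of _ n n _ n _ n]
  have "psd n S" unfolding S_def by (rule psd_udu[OF U(1)]) (simp add: d)
  moreover have "S * S = U * (diagm n (\<lambda>k. sqrt (d k)) * diagm n (\<lambda>k. sqrt (d k))) * adj U"
    unfolding S_def using U by (simp add: sq) (simp add: sq[symmetric] right_mult_one_mat[OF diagm_carrier])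
  moreover have "diagm n (\<lambda>k. sqrt (d k)) * diagm n (\<lambda>k. sqrt (d k)) = diagm n d"
    unfolding diag_mult_diag by (rule eq_matI) (use d in \<open>auto simp: diagm_def\<close>)
  ultimately show ?thesis using Aeq by auto
qed

lemma sq_inj_nonneg: "0 \<le> (x::real) \<Longrightarrow> 0 \<le> y \<Longrightarrow> x * x = y * y \<Longrightarrow> x = y"
  by (metis abs_of_nonneg real_sqrt_abs2)

lemma sqrt_unique:
  assumes B: "psd n B" and C: "psd n C" and BC: "B * B = C * C"
  shows "B = C"
proof -
  from psd_spectral[OF B] obtain W e where W: "W \<in> carrier_mat n n" "adj W * W = 1\<^sub>m n" "W * adj W = 1\<^sub>m n"
    and Beq: "B = W * diagm n e * adj W" and e: "\<forall>k<n. e k \<ge> 0" by blast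
  from psd_spectral[OF C] obtain V f where V: "V \<in> carrier_mat n n" "adj V * V = 1\<^sub>m n" "V * adj V = 1\<^sub>m n"
    and Ceq: "C = V * diagm n f * adj V" and f: "\<forall>k<n. f k \<ge> 0" by blast
  note sq = assoc_mult_mat[of _ n n _ n _ n]
  define M where "M = adj W * V"
  have M: "M \<in> carrier_mat n n" using W V by (simp add: M_def)
  define E2 where "E2 = diagm n e * diagm n e"
  define F2 where "F2 = diagm n f * diagm n f"
  have BB: "B * B = W * E2 * adj W" unfolding Beq E2_def using W 
    by (simp add: sq; simp add: sq[symmetric])
  have CC: "C * C = V * F2 * adj V" unfolding Ceq F2_def using V 
    by (simp add: sq; simp add: sq[symmetric])
  have "E2 * M = adj W * (B * B) * V"
    unfolding BB M_def E2_def using W V by (simp add: sq; simp add: sq[symmetric])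
  also have "\<dots> = adj W * (C * C) * V" using BC by simp
  also have "\<dots> = M * F2"
    unfolding CC M_def F2_def using W V by (simp add: sq; simp add: sq[symmetric])
  finally have EM: "E2 * M = M * F2" .
  have EMF: "diagm n e * M = M * diagm n f"
  proof (rule eq_matI)
    fix i j assume "i < dim_row (M * diagm n f)" "j < dim_col (M * diagm n f)"
    hence ij: "i < n" "j < n" using M by auto
    have "(E2 * M) $$ (i,j) = (M * F2) $$ (i,j)" using EM by simp
    hence "complex_of_real (e i * e i) * M $$ (i,j) = M $$ (i,j) * complex_of_real (f j * f j)"
      unfolding E2_def F2_def diag_mult_diag using M ij by (simp add: diag_mult_left diag_mult_right del: of_real_mult index_mult_mat)
    hence "M $$ (i,j) * complex_of_real (e i * e i) = M $$ (i,j) * complex_of_real (f j * f j)"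
      by (simp add: mult.commute del: of_real_mult)
    hence "M $$ (i,j) = 0 \<or> e i * e i = f j * f j" unfolding mult_cancel_left of_real_eq_iff .
    moreover have "e i * e i = f j * f j \<Longrightarrow> e i = f j"
      by (rule sq_inj_nonneg) (use e f ij in auto)
    ultimately have "complex_of_real (e i) * M $$ (i,j) = M $$ (i,j) * complex_of_real (f j)"
      by (auto simp: mult.commute)
    thus "(diagm n e * M) $$ (i,j) = (M * diagm n f) $$ (i,j)"
      using M ij by (simp add: diag_mult_left diag_mult_right del: index_mult_mat)
  qed (use M in auto)
  have "B * V = W * (diagm n e * M)"
    unfolding Beq M_def using W V by (simp add: sq)
  also have "\<dots> = W * M * diagm n f" unfolding EMF using W M by (simp add: sq)
  also have "\<dots> = V * diagm n f" unfolding M_def using W V by (simp add: sq[symmetric])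
  finally have BV: "B * V = V * diagm n f" .
  have Bc: "B \<in> carrier_mat n n" using B unfolding psd_def by blast
  have "B = B * (V * adj V)" using V Bc by simp
  also have "\<dots> = (B * V) * adj V" using V Bc by (simp add: sq)
  also have "\<dots> = C" unfolding BV Ceq ..
  finally show ?thesis .
qed

lemma mat_sqrt:
  assumes "psd n A"
  shows "psd n (mat_sqrt n A)" "mat_sqrt n A * mat_sqrt n A = A"
proof -
  have "\<exists>!S. psd n S \<and> S * S = A"
    using sqrt_exists[OF assms] sqrt_unique by blast
  from theI'[OF this] show "psd n (mat_sqrt n A)" "mat_sqrt n A * mat_sqrt n A = A"
    unfolding mat_sqrt_def by auto
qed



definition kraus :: "nat \<Rightarrow> nat \<Rightarrow> (nat \<Rightarrow> complex mat) \<Rightarrow> complex mat \<Rightarrow> complex mat" where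
  "kraus m p K A = mat m m (\<lambda>(r,s). \<Sum>k<p. (K k * A * adj (K k)) $$ (r,s))"

lemma kraus_carrier[simp]: "kraus m p K A \<in> carrier_mat m m" by (simp add: kraus_def)

lemma triple_entry:
  assumes K: "K \<in> carrier_mat m n" and A: "A \<in> carrier_mat n n" and r: "r < m" and s: "s < m"
  shows "(K * A * adj K) $$ (r,s) = (\<Sum>i<n. \<Sum>j<n. K $$ (r,i) * A $$ (i,j) * cnj (K $$ (s,j)))"
proof -
  have "(K * A * adj K) $$ (r,s) = (\<Sum>j<n. (K * A) $$ (r,j) * adj K $$ (j,s))"
    using K A r s by (intro mult_index) auto
  also have "\<dots> = (\<Sum>j<n. (\<Sum>i<n. K $$ (r,i) * A $$ (i,j)) * cnj (K $$ (s,j)))"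
    using K A r s by (intro sum.cong refl, subst mult_index[of _ m n _ n]) auto
  also have "\<dots> = (\<Sum>j<n. \<Sum>i<n. K $$ (r,i) * A $$ (i,j) * cnj (K $$ (s,j)))"
    by (simp add: sum_distrib_right)
  also have "\<dots> = (\<Sum>i<n. \<Sum>j<n. K $$ (r,i) * A $$ (i,j) * cnj (K $$ (s,j)))"
    by (rule sum.swap)
  finally show ?thesis .
qed

lemma munit_carrier[simp]: "munit n a b \<in> carrier_mat n n" by (simp add: munit_def)

lemma lin_zero:
  assumes N: "lin_map n m N"
  shows "N (0\<^sub>m n n) = 0\<^sub>m m m"
proof -
  have c: "N (0\<^sub>m n n) \<in> carrier_mat m m" using N by (simp add: lin_map_def)
  have e: "0 \<cdot>\<^sub>m 0\<^sub>m n n = (0\<^sub>m n n :: complex mat)" by (rule eq_matI) auto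
  have "N (0\<^sub>m n n) = N (0 \<cdot>\<^sub>m 0\<^sub>m n n)" by (simp only: e)
  also have "\<dots> = 0 \<cdot>\<^sub>m N (0\<^sub>m n n)" using N zero_carrier_mat[of n n] unfolding lin_map_def by blast
  also have "\<dots> = 0\<^sub>m m m" using c by (intro eq_matI) auto
  finally show ?thesis .
qed

lemma lin_expand_aux:
  assumes N: "lin_map n m N" and F: "finite F" "F \<subseteq> {..<n} \<times> {..<n}"
  shows "N (mat n n (\<lambda>(i,j). if (i,j) \<in> F then A $$ (i,j) else 0)) =
         mat m m (\<lambda>(r,s). \<Sum>(i,j)\<in>F. A $$ (i,j) * N (munit n i j) $$ (r,s))"
  using F
proof (induction F rule: finite_induct)
  case empty
  have e1: "mat n n (\<lambda>(i,j). if (i,j) \<in> {} then A $$ (i,j) else 0) = 0\<^sub>m n n" by (intro eq_matI) auto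
  have e2: "mat m m (\<lambda>(r,s). \<Sum>(i,j)\<in>{}. A $$ (i,j) * N (munit n i j) $$ (r,s)) = 0\<^sub>m m m" by (intro eq_matI) auto
  show ?case unfolding e1 e2 by (rule lin_zero[OF N])
next
  case (insert x F)
  obtain a b where x: "x = (a,b)" by (cases x)
  have ab: "a < n" "b < n" using insert x by auto
  have eq: "mat n n (\<lambda>(i,j). if (i,j) \<in> insert x F then A $$ (i,j) else 0) =
        mat n n (\<lambda>(i,j). if (i,j) \<in> F then A $$ (i,j) else 0) + A $$ (a,b) \<cdot>\<^sub>m munit n a b"
    using insert(2) x by (intro eq_matI) (auto simp: munit_def)
  have lin: "\<forall>A \<in> carrier_mat n n. \<forall>B \<in> carrier_mat n n. N (A + B) = N A + N B"
    "\<forall>c. \<forall>A \<in> carrier_mat n n. N (c \<cdot>\<^sub>m A) = c \<cdot>\<^sub>m N A"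
    "\<forall>A \<in> carrier_mat n n. N A \<in> carrier_mat m m" using N by (auto simp: lin_map_def)
  have Nc: "N (munit n a b) \<in> carrier_mat m m" using lin(3) by simp
  have "N (mat n n (\<lambda>(i,j). if (i,j) \<in> insert x F then A $$ (i,j) else 0)) =
        N (mat n n (\<lambda>(i,j). if (i,j) \<in> F then A $$ (i,j) else 0)) + A $$ (a,b) \<cdot>\<^sub>m N (munit n a b)"
    unfolding eq using lin by simp
  also have "\<dots> = mat m m (\<lambda>(r,s). \<Sum>(i,j)\<in>insert x F. A $$ (i,j) * N (munit n i j) $$ (r,s))"
    unfolding insert.IH[OF subset_trans[OF subset_insertI insert(4)]]
    using insert(1,2) x Nc by (intro eq_matI) (auto simp: add.commute)
  finally show ?case .
qed

lemma lin_expand: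
  assumes N: "lin_map n m N" and A: "A \<in> carrier_mat n n"
  shows "N A = mat m m (\<lambda>(r,s). \<Sum>i<n. \<Sum>j<n. A $$ (i,j) * N (munit n i j) $$ (r,s))"
proof -
  have "A = mat n n (\<lambda>(i,j). if (i,j) \<in> {..<n} \<times> {..<n} then A $$ (i,j) else 0)"
    using A by (intro eq_matI) auto
  hence "N A = mat m m (\<lambda>(r,s). \<Sum>(i,j)\<in>{..<n} \<times> {..<n}. A $$ (i,j) * N (munit n i j) $$ (r,s))"
    using lin_expand_aux[OF N, of "{..<n} \<times> {..<n}" A] by simp
  also have "\<dots> = mat m m (\<lambda>(r,s). \<Sum>i<n. \<Sum>j<n. A $$ (i,j) * N (munit n i j) $$ (r,s))"
    by (simp add: sum.cartesian_product)
  finally show ?thesis .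
qed

lemma divmod_idx: "(r::nat) < m \<Longrightarrow> (i * m + r) div m = i" "r < m \<Longrightarrow> (i * m + r) mod m = r"
  by auto

lemma idx_bound: "(i::nat) < n \<Longrightarrow> (r::nat) < m \<Longrightarrow> i * m + r < n * m"
proof -
  assume "i < n" "r < m"
  hence "i * m + r < i * m + m" by simp
  also have "\<dots> = (Suc i) * m" by simp
  also have "\<dots> \<le> n * m" using \<open>i < n\<close> by (intro mult_right_mono) auto
  finally show ?thesis .
qed

lemma choi_index: "i < n \<Longrightarrow> j < n \<Longrightarrow> r < m \<Longrightarrow> s < m \<Longrightarrow>
  choi n m N $$ (i * m + r, j * m + s) = N (munit n i j) $$ (r, s)"
  by (simp add: choi_def idx_bound)

lemma choi_psd_of_cp:
  assumes N: "lin_map n m N" and cp: "completely_positive n m N"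
  shows "psd (n * m) (choi n m N)"
proof -
  define \<Omega> where "\<Omega> = mat (n*n) (n*n) (\<lambda>(a,b). (if a div n = a mod n then 1 else 0) * (if b div n = b mod n then 1 else 0) :: complex)"
  have "psd (n*n) \<Omega>"
    by (rule psd_gram[where K="{0::nat}" and c="\<lambda>_. 1" and f="\<lambda>_ a. if a div n = a mod n then 1 else 0"])
       (auto simp: \<Omega>_def)
  hence "psd (n * m) (id_tensor n n m N \<Omega>)" using cp unfolding completely_positive_def by blast
  moreover have "id_tensor n n m N \<Omega> = choi n m N"
  proof (rule eq_matI)
    fix r s assume "r < dim_row (choi n m N)" "s < dim_col (choi n m N)"
    hence rs: "r < n * m" "s < n * m" by (auto simp: choi_def)
    have rd: "r div m < n" "s div m < n" using rs by (auto simp: less_mult_imp_div_less)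
    have "mat n n (\<lambda>(i,j). \<Omega> $$ ((r div m) * n + i, (s div m) * n + j)) = munit n (r div m) (s div m)"
    proof (rule eq_matI)
      fix i j assume "i < dim_row (munit n (r div m) (s div m))" "j < dim_col (munit n (r div m) (s div m))"
      hence ij: "i < n" "j < n" by (auto simp: munit_def)
      have b: "(r div m) * n + i < n * n" "(s div m) * n + j < n * n" using idx_bound rd ij by auto
      show "mat n n (\<lambda>(i,j). \<Omega> $$ ((r div m) * n + i, (s div m) * n + j)) $$ (i,j) = munit n (r div m) (s div m) $$ (i,j)"
        using ij b by (auto simp: \<Omega>_def munit_def)
    qed (auto simp: munit_def)
    thus "id_tensor n n m N \<Omega> $$ (r,s) = choi n m N $$ (r,s)"
      using rs by (simp add: id_tensor_def choi_def)
  qed (auto simp: id_tensor_def choi_def)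
  ultimately show ?thesis by simp
qed



lemma unitary_cols_orth:
  assumes U: "U \<in> carrier_mat N N" "adj U * U = 1\<^sub>m N" and k: "k < N" and l: "l < N"
  shows "(\<Sum>i<N. cnj (U $$ (i,k)) * U $$ (i,l)) = (if k = l then 1 else 0)"
proof -
  have "(\<Sum>i<N. cnj (U $$ (i,k)) * U $$ (i,l)) = (adj U * U) $$ (k,l)"
    using U k l by (subst mult_index[of _ N N _ N]) auto
  thus ?thesis using U k l by simp
qed

lemma rank_nonzero_eigs:
  assumes J: "J \<in> carrier_mat N N" and U: "U \<in> carrier_mat N N" "adj U * U = 1\<^sub>m N" "U * adj U = 1\<^sub>m N"
    and Jeq: "J = U * diagm N d * adj U"
  shows "card {k. k < N \<and> d k \<noteq> 0} \<le> vec_space.rank N J"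
proof -
  interpret vec_space "TYPE(complex)" N .
  define S where "S = {k. k < N \<and> d k \<noteq> 0}"
  define T where "T = (\<lambda>k. col U k) ` S"
  have colc: "col U k \<in> carrier_vec N" for k using U by (intro carrier_vecI) simp
  have Ud: "dim_row U = N" "dim_col U = N" using U by auto
  have JU: "J * U = U * diagm N d" unfolding Jeq using U
    by (simp add: assoc_mult_mat[of _ N N _ N _ N])
  have colJ: "J *\<^sub>v col U k = complex_of_real (d k) \<cdot>\<^sub>v col U k" if k: "k < N" for k
  proof -
    have "J *\<^sub>v col U k = col (J * U) k" by (rule col_mult2[OF J U(1) k, symmetric])
    also have "\<dots> = col (U * diagm N d) k" unfolding JU ..
    also have "\<dots> = complex_of_real (d k) \<cdot>\<^sub>v col U k"
    proof (rule eq_vecI)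
      fix i assume "i < dim_vec (complex_of_real (d k) \<cdot>\<^sub>v col U k)"
      hence i: "i < N" using Ud by simp
      have "col (U * diagm N d) k $ i = (U * diagm N d) $$ (i,k)" using i k U by simp
      also have "\<dots> = U $$ (i,k) * complex_of_real (d k)" by (rule diag_mult_right[OF U(1) i k])
      finally show "col (U * diagm N d) k $ i = (complex_of_real (d k) \<cdot>\<^sub>v col U k) $ i"
        using i k Ud by (simp add: mult.commute)
    qed (use Ud U in simp)
    finally show ?thesis .
  qed
  have TW: "T \<subseteq> span (set (cols J))"
  proof
    fix x assume "x \<in> T"
    then obtain k where k: "k < N" "d k \<noteq> 0" and x: "x = col U k" by (auto simp: T_def S_def)
    have "J *\<^sub>v (complex_of_real (1 / d k) \<cdot>\<^sub>v col U k) = complex_of_real (1 / d k) \<cdot>\<^sub>v (J *\<^sub>v col U k)"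
      using J colc by (simp add: mult_mat_vec)
    also have "\<dots> = x" unfolding colJ[OF k(1)] x using k(2) by (simp add: smult_smult_assoc)
    finally have "x \<in> col_space J" unfolding col_space_eq[OF J] using J colc x by auto
    thus "x \<in> span (set (cols J))" unfolding col_space_def .
  qed
  have inj: "inj_on (\<lambda>k. col U k) S"
  proof
    fix k l assume kl: "k \<in> S" "l \<in> S" and eq: "col U k = col U l"
    have "(\<Sum>i<N. cnj (U $$ (i,k)) * U $$ (i,l)) = (\<Sum>i<N. cnj (U $$ (i,k)) * U $$ (i,k))"
    proof (intro sum.cong refl)
      fix i assume "i \<in> {..<N}"
      hence "col U k $ i = col U l $ i" using eq by simp
      thus "cnj (U $$ (i,k)) * U $$ (i,l) = cnj (U $$ (i,k)) * U $$ (i,k)" using \<open>i \<in> {..<N}\<close> Ud kl by (auto simp: S_def)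
    qed
    thus "k = l" using unitary_cols_orth[OF U(1,2)] kl by (auto simp: S_def split: if_splits)
  qed
  have cardT: "card T = card S" unfolding T_def by (rule card_image[OF inj])
  have Tc: "T \<subseteq> carrier_vec N" using colc by (auto simp: T_def)
  have li: "lin_indpt T"
  proof
    assume "lin_dep T"
    then obtain A a v where A: "finite A" "A \<subseteq> T" and comb: "lincomb a A = 0\<^sub>v N" and v: "v \<in> A" and av: "a v \<noteq> 0"
      unfolding lin_dep_def by auto
    obtain k where k: "k \<in> S" and vk: "v = col U k" using v A by (auto simp: T_def)
    have Ac: "A \<subseteq> carrier_vec N" using A Tc by auto
    have "0 = (\<Sum>i<N. cnj (U $$ (i,k)) * lincomb a A $ i)" unfolding comb by simp
    also have "\<dots> = (\<Sum>i<N. \<Sum>x\<in>A. cnj (U $$ (i,k)) * (a x * x $ i))"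
      by (intro sum.cong refl) (simp add: lincomb_index[OF _ Ac] sum_distrib_left)
    also have "\<dots> = (\<Sum>x\<in>A. a x * (\<Sum>i<N. cnj (U $$ (i,k)) * x $ i))"
      by (subst sum.swap) (simp add: sum_distrib_left mult_ac)
    also have "\<dots> = (\<Sum>x\<in>A. if x = v then a v else 0)"
    proof (intro sum.cong refl)
      fix x assume x: "x \<in> A"
      then obtain l where l: "l \<in> S" and xl: "x = col U l" using A by (auto simp: T_def)
      have "(\<Sum>i<N. cnj (U $$ (i,k)) * x $ i) = (\<Sum>i<N. cnj (U $$ (i,k)) * U $$ (i,l))"
        unfolding xl using U Ud l by (intro sum.cong refl) (auto simp: S_def)
      also have "\<dots> = (if k = l then 1 else 0)" using unitary_cols_orth[OF U(1,2)] k l by (auto simp: S_def)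
      finally show "a x * (\<Sum>i<N. cnj (U $$ (i,k)) * x $ i) = (if x = v then a v else 0)"
        using inj k l unfolding vk xl by (auto simp: inj_on_def)
    qed
    also have "\<dots> = a v" using v A by simp
    finally show False using av by simp
  qed
  have colsJ: "set (cols J) \<subseteq> carrier_vec N" using J by (auto simp: cols_def)
  have vsW: "vectorspace class_ring (span_vs (set (cols J)))"
    using span_is_subspace[OF colsJ, THEN subspace_is_vs] by simp
  have liW: "LinearCombinations.module.lin_indpt class_ring (span_vs (set (cols J))) T"
    using span_li_not_depend(2)[OF TW span_is_submodule[OF colsJ]] li by simp
  have "card T \<le> vectorspace.dim class_ring (span_vs (set (cols J)))"
    by (rule vectorspace.li_le_dim(2)[OF vsW fin_dim_span_cols[OF J] _ liW]) (use TW in simp)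
  thus ?thesis unfolding rank_def cardT S_def .
qed

lemma kraus_from_choi:
  assumes N: "lin_map n m N" and J: "psd (n*m) (choi n m N)"
  shows "\<exists>p K. (\<forall>k. K k \<in> carrier_mat m n) \<and> (\<forall>A\<in>carrier_mat n n. N A = kraus m p K A) \<and>
     p \<le> vec_space.rank (n*m) (choi n m N)"
proof -
  define J where "J = choi n m N"
  have Jc: "J \<in> carrier_mat (n*m) (n*m)" by (simp add: J_def choi_def)
  from psd_spectral[OF J[folded J_def]] obtain U d where U: "U \<in> carrier_mat (n*m) (n*m)" 
    "adj U * U = 1\<^sub>m (n*m)" "U * adj U = 1\<^sub>m (n*m)" and Jeq: "J = U * diagm (n*m) d * adj U" 
    and d: "\<forall>k<n*m. d k \<ge> 0" by blast
  define S where "S = {k. k < n*m \<and> d k \<noteq> 0}"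
  define p where "p = card S"
  have finS: "finite S" by (simp add: S_def)
  obtain g where g: "bij_betw g {..<p} S"
    using ex_bij_betw_nat_finite[OF finS] unfolding p_def atLeast0LessThan by blast
  define K where "K j = mat m n (\<lambda>(r,i). complex_of_real (sqrt (d (g j))) * U $$ (i*m + r, g j))" for j
  have Kc: "K j \<in> carrier_mat m n" for j by (simp add: K_def)
  have main: "N A = kraus m p K A" if A: "A \<in> carrier_mat n n" for A
  proof (rule eq_matI)
    fix r s assume "r < dim_row (kraus m p K A)" "s < dim_col (kraus m p K A)"
    hence rs: "r < m" "s < m" by (auto simp: kraus_def)
    define T where "T k = (\<Sum>i<n. \<Sum>l<n. complex_of_real (d k) * U $$ (i*m + r, k) * A $$ (i,l) * cnj (U $$ (l*m + s, k)))" for k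
    have "kraus m p K A $$ (r,s) = (\<Sum>j<p. (K j * A * adj (K j)) $$ (r,s))"
      using rs by (simp add: kraus_def)
    also have "\<dots> = (\<Sum>j<p. T (g j))"
    proof (rule sum.cong[OF refl])
      fix j assume "j \<in> {..<p}"
      hence gj: "g j \<in> S" using g by (auto simp: bij_betw_def)
      hence dj: "d (g j) \<ge> 0" using d by (auto simp: S_def)
      have sq: "complex_of_real (sqrt (d (g j))) * cnj (complex_of_real (sqrt (d (g j)))) = complex_of_real (d (g j))"
        using dj by (simp flip: of_real_mult)
      show "(K j * A * adj (K j)) $$ (r,s) = T (g j)"
        unfolding triple_entry[OF Kc A rs] T_def
      proof (intro sum.cong refl)
        fix i l assume il: "i \<in> {..<n}" "l \<in> {..<n}"
        have "K j $$ (r,i) * A $$ (i,l) * cnj (K j $$ (s,l)) = 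
          (complex_of_real (sqrt (d (g j))) * cnj (complex_of_real (sqrt (d (g j))))) * U $$ (i*m + r, g j) * A $$ (i,l) * cnj (U $$ (l*m + s, g j))"
          using il rs by (simp add: K_def mult_ac)
        also have "\<dots> = complex_of_real (d (g j)) * U $$ (i*m + r, g j) * A $$ (i,l) * cnj (U $$ (l*m + s, g j))"
          unfolding sq ..
        finally show "K j $$ (r,i) * A $$ (i,l) * cnj (K j $$ (s,l)) = complex_of_real (d (g j)) * U $$ (i*m + r, g j) * A $$ (i,l) * cnj (U $$ (l*m + s, g j))" .
      qed
    qed
    also have "\<dots> = (\<Sum>k\<in>S. T k)" by (rule sum.reindex_bij_betw[OF g])
    also have "\<dots> = (\<Sum>k<n*m. T k)"
      by (rule sum.mono_neutral_left) (auto simp: S_def T_def)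
    also have "\<dots> = (\<Sum>i<n. \<Sum>l<n. A $$ (i,l) * (\<Sum>k<n*m. U $$ (i*m + r, k) * complex_of_real (d k) * cnj (U $$ (l*m + s, k))))"
      unfolding T_def
      by (subst sum.swap, rule sum.cong[OF refl], subst sum.swap) (simp add: sum_distrib_left mult_ac)
    also have "\<dots> = (\<Sum>i<n. \<Sum>l<n. A $$ (i,l) * N (munit n i l) $$ (r,s))"
    proof (intro sum.cong refl)
      fix i l assume il: "i \<in> {..<n}" "l \<in> {..<n}"
      have b: "i*m + r < n*m" "l*m + s < n*m" using il rs idx_bound by auto
      have "(\<Sum>k<n*m. U $$ (i*m + r, k) * complex_of_real (d k) * cnj (U $$ (l*m + s, k))) = J $$ (i*m + r, l*m + s)"
        unfolding Jeq by (rule udu_index[OF U(1) b, symmetric])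
      also have "\<dots> = N (munit n i l) $$ (r,s)" unfolding J_def using il rs by (simp add: choi_index)
      finally show "A $$ (i,l) * (\<Sum>k<n*m. U $$ (i*m + r, k) * complex_of_real (d k) * cnj (U $$ (l*m + s, k))) = A $$ (i,l) * N (munit n i l) $$ (r,s)"
        by simp
    qed
    also have "\<dots> = N A $$ (r,s)" unfolding lin_expand[OF N A] using rs by simp
    finally show "N A $$ (r,s) = kraus m p K A $$ (r,s)" ..
  qed (use N A in \<open>auto simp: lin_map_def kraus_def\<close>)
  have "p \<le> vec_space.rank (n*m) J" unfolding p_def S_def by (rule rank_nonzero_eigs[OF Jc U Jeq])
  thus ?thesis using Kc main unfolding J_def by blast
qed



lemma sum_split_nat: "(\<Sum>k<p*q. f k) = (\<Sum>a<p. \<Sum>b<q. f (a*q + b))" for p q :: nat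
proof -
  have "(\<Sum>k<p*q. f k) = (\<Sum>(a,b)\<in>{..<p}\<times>{..<q}. f (a*q + b))"
  proof (rule sum.reindex_bij_witness[where j="\<lambda>k. (k div q, k mod q)" and i="\<lambda>(a,b). a*q + b"])
    fix x assume "x \<in> {..<p} \<times> {..<q}"
    then obtain a b where x: "x = (a,b)" "a < p" "b < q" by auto
    show "(case x of (a, b) \<Rightarrow> a * q + b) \<in> {..<p * q}" using x idx_bound by auto
    show "((case x of (a, b) \<Rightarrow> a * q + b) div q, (case x of (a, b) \<Rightarrow> a * q + b) mod q) = x" using x by auto
  next
    fix k assume k: "k \<in> {..<p*q}"
    hence q0: "q > 0" by (cases q) auto
    thus "(case (k div q, k mod q) of (a, b) \<Rightarrow> a * q + b) = k" by simp
    show "(k div q, k mod q) \<in> {..<p} \<times> {..<q}" using k q0 by (auto simp: less_mult_imp_div_less)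
    show "(case (k div q, k mod q) of (a, b) \<Rightarrow> f (a * q + b)) = f k" using q0 by simp
  qed
  also have "\<dots> = (\<Sum>a<p. \<Sum>b<q. f (a*q + b))" by (simp add: sum.cartesian_product)
  finally show ?thesis .
qed

lemma munit_entry: "i < n \<Longrightarrow> j < n \<Longrightarrow> munit n x y $$ (i,j) = (if i = x \<and> j = y then 1 else 0)"
  by (simp add: munit_def)

lemma kraus_munit_entry:
  assumes K: "K \<in> carrier_mat m n" and xy: "x < n" "y < n" and uv: "u < m" "v < m"
  shows "(K * munit n x y * adj K) $$ (u,v) = K $$ (u,x) * cnj (K $$ (v,y))"
proof -
  have "(K * munit n x y * adj K) $$ (u,v) = (\<Sum>i<n. \<Sum>j<n. K $$ (u,i) * munit n x y $$ (i,j) * cnj (K $$ (v,j)))"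
    by (rule triple_entry[OF K munit_carrier uv])
  also have "\<dots> = (\<Sum>i<n. if i = x then K $$ (u,x) * cnj (K $$ (v,y)) else 0)"
  proof (intro sum.cong refl)
    fix i assume i: "i \<in> {..<n}"
    have "(\<Sum>j<n. K $$ (u,i) * munit n x y $$ (i,j) * cnj (K $$ (v,j))) = 
      (\<Sum>j<n. if j = y then (if i = x then K $$ (u,x) * cnj (K $$ (v,y)) else 0) else 0)"
      using i by (intro sum.cong refl) (auto simp: munit_entry)
    thus "(\<Sum>j<n. K $$ (u,i) * munit n x y $$ (i,j) * cnj (K $$ (v,j))) = (if i = x then K $$ (u,x) * cnj (K $$ (v,y)) else 0)"
      using xy by simp
  qed
  also have "\<dots> = K $$ (u,x) * cnj (K $$ (v,y))" using xy by simp
  finally show ?thesis .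
qed

lemma choi_inv_lin: "lin_map n m (choi_inv n m T)"
  unfolding lin_map_def
proof (intro conjI ballI allI)
  fix A B :: "complex mat" assume A: "A \<in> carrier_mat n n" and B: "B \<in> carrier_mat n n"
  show "choi_inv n m T (A + B) = choi_inv n m T A + choi_inv n m T B"
    using A B by (intro eq_matI) (auto simp: choi_inv_def distrib_right sum.distrib)
next
  fix c and A :: "complex mat" assume A: "A \<in> carrier_mat n n"
  show "choi_inv n m T (c \<cdot>\<^sub>m A) = c \<cdot>\<^sub>m choi_inv n m T A"
    using A by (intro eq_matI) (auto simp: choi_inv_def sum_distrib_left mult_ac)
qed (simp add: choi_inv_def)



lemma reidx4:
  fixes h :: "nat \<Rightarrow> nat \<Rightarrow> nat \<Rightarrow> nat \<Rightarrow> nat \<Rightarrow> nat \<Rightarrow> complex" and X Z M :: nat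
  shows "(\<Sum>p<Z*M. \<Sum>q<Z*M. \<Sum>i<X. \<Sum>j<X. h i (p div M) (p mod M) j (q div M) (q mod M)) =
         (\<Sum>c<X*Z. \<Sum>d<X*Z. \<Sum>\<mu><M. \<Sum>\<nu><M. h (c div Z) (c mod Z) \<mu> (d div Z) (d mod Z) \<nu>)"
proof -
  define g where "g = (\<lambda>(p,q,i,j). h i (p div M) (p mod M) j (q div M) (q mod M))"
  define g' where "g' = (\<lambda>(c,d,\<mu>,\<nu>). h (c div Z) (c mod Z) \<mu> (d div Z) (d mod Z) \<nu>)"
  have L: "(\<Sum>p<Z*M. \<Sum>q<Z*M. \<Sum>i<X. \<Sum>j<X. h i (p div M) (p mod M) j (q div M) (q mod M)) =
     sum g ({..<Z*M} \<times> {..<Z*M} \<times> {..<X} \<times> {..<X})"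
    unfolding g_def by (simp add: sum.cartesian_product)
  have R: "(\<Sum>c<X*Z. \<Sum>d<X*Z. \<Sum>\<mu><M. \<Sum>\<nu><M. h (c div Z) (c mod Z) \<mu> (d div Z) (d mod Z) \<nu>) =
     sum g' ({..<X*Z} \<times> {..<X*Z} \<times> {..<M} \<times> {..<M})"
    unfolding g'_def by (simp add: sum.cartesian_product)
  have "sum g ({..<Z*M} \<times> {..<Z*M} \<times> {..<X} \<times> {..<X}) = sum g' ({..<X*Z} \<times> {..<X*Z} \<times> {..<M} \<times> {..<M})"
  proof (rule sum.reindex_bij_witness[where j="\<lambda>(p,q,i,j). (i*Z + p div M, j*Z + q div M, p mod M, q mod M)"
        and i="\<lambda>(c,d,\<mu>,\<nu>). ((c mod Z)*M + \<mu>, (d mod Z)*M + \<nu>, c div Z, d div Z)"])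
    fix a assume a: "a \<in> {..<Z*M} \<times> {..<Z*M} \<times> {..<X} \<times> {..<X}"
    then obtain p q i j where aa: "a = (p,q,i,j)" "p < Z*M" "q < Z*M" "i < X" "j < X" by auto
    have M0: "M > 0" using aa by (cases M) auto
    have pd: "p div M < Z" "q div M < Z" using aa by (auto simp: less_mult_imp_div_less)
    show "(case (case a of (p,q,i,j) \<Rightarrow> (i*Z + p div M, j*Z + q div M, p mod M, q mod M)) of
          (c,d,\<mu>,\<nu>) \<Rightarrow> ((c mod Z)*M + \<mu>, (d mod Z)*M + \<nu>, c div Z, d div Z)) = a"
      using aa pd by simp
    show "(case a of (p,q,i,j) \<Rightarrow> (i*Z + p div M, j*Z + q div M, p mod M, q mod M)) \<in> {..<X*Z} \<times> {..<X*Z} \<times> {..<M} \<times> {..<M}"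
      using aa pd M0 idx_bound by auto
    show "g' (case a of (p,q,i,j) \<Rightarrow> (i*Z + p div M, j*Z + q div M, p mod M, q mod M)) = g a"
      using aa pd unfolding g_def g'_def by simp
  next
    fix b assume b: "b \<in> {..<X*Z} \<times> {..<X*Z} \<times> {..<M} \<times> {..<M}"
    then obtain c d \<mu> \<nu> where bb: "b = (c,d,\<mu>,\<nu>)" "c < X*Z" "d < X*Z" "\<mu> < M" "\<nu> < M" by auto
    have Z0: "Z > 0" using bb by (cases Z) auto
    have cd: "c mod Z < Z" "d mod Z < Z" "c div Z < X" "d div Z < X" using bb Z0 by (auto simp: less_mult_imp_div_less)
    show "(case (case b of (c,d,\<mu>,\<nu>) \<Rightarrow> ((c mod Z)*M + \<mu>, (d mod Z)*M + \<nu>, c div Z, d div Z)) of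
          (p,q,i,j) \<Rightarrow> (i*Z + p div M, j*Z + q div M, p mod M, q mod M)) = b"
      using bb by simp
    show "(case b of (c,d,\<mu>,\<nu>) \<Rightarrow> ((c mod Z)*M + \<mu>, (d mod Z)*M + \<nu>, c div Z, d div Z)) \<in> {..<Z*M} \<times> {..<Z*M} \<times> {..<X} \<times> {..<X}"
      using bb cd idx_bound by auto
  qed
  thus ?thesis using L R by simp
qed

definition Lop :: "nat \<Rightarrow> nat \<Rightarrow> nat \<Rightarrow> nat \<Rightarrow> nat \<Rightarrow> complex mat \<Rightarrow> complex mat \<Rightarrow> complex mat" where
  "Lop dXo dX dZ dM dZo Ea Fb = mat (dXo*dZo) (dX*dZ) (\<lambda>(row,c). \<Sum>\<mu><dM. Fb $$ (row mod dZo, (c mod dZ)*dM + \<mu>) * Ea $$ ((c div dZ)*dM + \<mu>, row div dZo))"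

lemma Lop_carrier[simp]: "Lop dXo dX dZ dM dZo Ea Fb \<in> carrier_mat (dXo*dZo) (dX*dZ)"
  by (simp add: Lop_def)

lemma supermap_kraus:
  fixes E F :: "nat \<Rightarrow> complex mat"
  assumes E: "\<And>a. E a \<in> carrier_mat (dX*dM) dXo" and F: "\<And>b. F b \<in> carrier_mat dZo (dZ*dM)"
    and Epre: "\<forall>A\<in>carrier_mat dXo dXo. Epre A = kraus (dX*dM) pa E A"
    and Epost: "\<forall>B\<in>carrier_mat (dZ*dM) (dZ*dM). Epost B = kraus dZo pb F B"
    and R: "\<forall>N. lin_map dX dZ N \<longrightarrow> (\<forall>A\<in>carrier_mat dXo dXo. R N A = Epost (tensor_id dX dZ dM N (Epre A)))"
    and tau: "\<tau> \<in> carrier_mat (dX*dZ) (dX*dZ)"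
  shows "choi_supermap dX dZ dXo dZo R \<tau> = kraus (dXo*dZo) (pa*pb) (\<lambda>k. Lop dXo dX dZ dM dZo (E (k div pb)) (F (k mod pb))) \<tau>"
proof (rule eq_matI)
  fix row col assume "row < dim_row (kraus (dXo*dZo) (pa*pb) (\<lambda>k. Lop dXo dX dZ dM dZo (E (k div pb)) (F (k mod pb))) \<tau>)"
    "col < dim_col (kraus (dXo*dZo) (pa*pb) (\<lambda>k. Lop dXo dX dZ dM dZo (E (k div pb)) (F (k mod pb))) \<tau>)"
  hence rc: "row < dXo*dZo" "col < dXo*dZo" by (auto simp: kraus_def)
  define x where "x = row div dZo"
  define o1 where "o1 = row mod dZo"
  define y where "y = col div dZo"
  define o2 where "o2 = col mod dZo"
  have Zo: "dZo > 0" using rc by (cases dZo) auto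
  have xy: "x < dXo" "y < dXo" "o1 < dZo" "o2 < dZo" using rc Zo
    by (auto simp: x_def y_def o1_def o2_def less_mult_imp_div_less)
  define N where "N = choi_inv dX dZ \<tau>"
  have linN: "lin_map dX dZ N" unfolding N_def by (rule choi_inv_lin)
  define P where "P = Epre (munit dXo x y)"
  define T where "T = tensor_id dX dZ dM N P"
  have Tc: "T \<in> carrier_mat (dZ*dM) (dZ*dM)" by (simp add: T_def tensor_id_def)
  have Pe: "P $$ (u,v) = (\<Sum>a<pa. E a $$ (u,x) * cnj (E a $$ (v,y)))" if "u < dX*dM" "v < dX*dM" for u v
  proof -
    have "P $$ (u,v) = kraus (dX*dM) pa E (munit dXo x y) $$ (u,v)" unfolding P_def using Epre by simp
    also have "\<dots> = (\<Sum>a<pa. (E a * munit dXo x y * adj (E a)) $$ (u,v))" using that by (simp add: kraus_def)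
    also have "\<dots> = (\<Sum>a<pa. E a $$ (u,x) * cnj (E a $$ (v,y)))"
      by (intro sum.cong refl kraus_munit_entry[OF E xy(1,2) that])
    finally show ?thesis .
  qed
  define H where "H a b i z \<mu> j z' \<nu> = F b $$ (o1, z*dM+\<mu>) * E a $$ (i*dM+\<mu>, x) * \<tau> $$ (i*dZ+z, j*dZ+z') *
      cnj (F b $$ (o2, z'*dM+\<nu>) * E a $$ (j*dM+\<nu>, y))" for a b i z \<mu> j z' \<nu>
  have Te: "T $$ (p,q) = (\<Sum>i<dX. \<Sum>j<dX. (\<Sum>a<pa. E a $$ (i*dM + p mod dM, x) * cnj (E a $$ (j*dM + q mod dM, y))) *
      \<tau> $$ (i*dZ + p div dM, j*dZ + q div dM))" if pq: "p < dZ*dM" "q < dZ*dM" for p q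
  proof -
    have M0: "dM > 0" using pq by (cases dM) auto
    have pd: "p div dM < dZ" "q div dM < dZ" using pq by (auto simp: less_mult_imp_div_less)
    have "T $$ (p,q) = N (mat dX dX (\<lambda>(i,j). P $$ (i*dM + p mod dM, j*dM + q mod dM))) $$ (p div dM, q div dM)"
      using pq by (simp add: T_def tensor_id_def)
    also have "\<dots> = (\<Sum>i<dX. \<Sum>j<dX. P $$ (i*dM + p mod dM, j*dM + q mod dM) * \<tau> $$ (i*dZ + p div dM, j*dZ + q div dM))"
      using pd by (simp add: N_def choi_inv_def)
    also have "\<dots> = (\<Sum>i<dX. \<Sum>j<dX. (\<Sum>a<pa. E a $$ (i*dM + p mod dM, x) * cnj (E a $$ (j*dM + q mod dM, y))) *
      \<tau> $$ (i*dZ + p div dM, j*dZ + q div dM))"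
      using M0 idx_bound by (intro sum.cong refl) (simp add: Pe)
    finally show ?thesis .
  qed
  have lhs_b: "(F b * T * adj (F b)) $$ (o1,o2) = 
    (\<Sum>a<pa. \<Sum>p<dZ*dM. \<Sum>q<dZ*dM. \<Sum>i<dX. \<Sum>j<dX. H a b i (p div dM) (p mod dM) j (q div dM) (q mod dM))" for b
  proof -
    have "(F b * T * adj (F b)) $$ (o1,o2) = (\<Sum>p<dZ*dM. \<Sum>q<dZ*dM. F b $$ (o1,p) * T $$ (p,q) * cnj (F b $$ (o2,q)))"
      by (rule triple_entry[OF F Tc xy(3,4)])
    also have "\<dots> = (\<Sum>p<dZ*dM. \<Sum>q<dZ*dM. \<Sum>i<dX. \<Sum>j<dX. \<Sum>a<pa. H a b i (p div dM) (p mod dM) j (q div dM) (q mod dM))"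
      unfolding H_def by (intro sum.cong refl) (simp add: Te sum_distrib_left sum_distrib_right mult_ac)
    also have "\<dots> = (\<Sum>a<pa. \<Sum>p<dZ*dM. \<Sum>q<dZ*dM. \<Sum>i<dX. \<Sum>j<dX. H a b i (p div dM) (p mod dM) j (q div dM) (q mod dM))"
      by (simp only: sum.swap[of _ "{..<dX}" "{..<pa}"] sum.swap[of _ "{..<dZ*dM}" "{..<pa}"])
    finally show ?thesis .
  qed
  have rhs_ab: "(Lop dXo dX dZ dM dZo (E a) (F b) * \<tau> * adj (Lop dXo dX dZ dM dZo (E a) (F b))) $$ (row,col) =
    (\<Sum>p<dZ*dM. \<Sum>q<dZ*dM. \<Sum>i<dX. \<Sum>j<dX. H a b i (p div dM) (p mod dM) j (q div dM) (q mod dM))" for a b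
  proof -
    let ?L = "Lop dXo dX dZ dM dZo (E a) (F b)"
    have "(?L * \<tau> * adj ?L) $$ (row,col) = (\<Sum>c<dX*dZ. \<Sum>d<dX*dZ. ?L $$ (row,c) * \<tau> $$ (c,d) * cnj (?L $$ (col,d)))"
      by (rule triple_entry[OF Lop_carrier tau rc])
    also have "\<dots> = (\<Sum>c<dX*dZ. \<Sum>d<dX*dZ. \<Sum>\<mu><dM. \<Sum>\<nu><dM. H a b (c div dZ) (c mod dZ) \<mu> (d div dZ) (d mod dZ) \<nu>)"
    proof (intro sum.cong refl)
      fix c d assume cd: "c \<in> {..<dX*dZ}" "d \<in> {..<dX*dZ}"
      have Z0: "dZ > 0" using cd by (cases dZ) auto
      have tc: "\<tau> $$ (c,d) = \<tau> $$ ((c div dZ)*dZ + c mod dZ, (d div dZ)*dZ + d mod dZ)" by simp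
      show "?L $$ (row,c) * \<tau> $$ (c,d) * cnj (?L $$ (col,d)) = (\<Sum>\<mu><dM. \<Sum>\<nu><dM. H a b (c div dZ) (c mod dZ) \<mu> (d div dZ) (d mod dZ) \<nu>)"
        unfolding H_def tc using rc cd
        by (simp add: Lop_def x_def y_def o1_def o2_def cnj_sum sum_distrib_left sum_distrib_right mult_ac)
    qed
    also have "\<dots> = (\<Sum>p<dZ*dM. \<Sum>q<dZ*dM. \<Sum>i<dX. \<Sum>j<dX. H a b i (p div dM) (p mod dM) j (q div dM) (q mod dM))"
      by (rule reidx4[symmetric])
    finally show ?thesis .
  qed
  have "choi_supermap dX dZ dXo dZo R \<tau> $$ (row,col) = R N (munit dXo x y) $$ (o1,o2)"
    using rc by (simp add: choi_supermap_def choi_def N_def x_def y_def o1_def o2_def)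
  also have "\<dots> = Epost T $$ (o1,o2)" using R linN by (simp add: T_def P_def)
  also have "\<dots> = kraus dZo pb F T $$ (o1,o2)" using Epost Tc by simp
  also have "\<dots> = (\<Sum>b<pb. \<Sum>a<pa. \<Sum>p<dZ*dM. \<Sum>q<dZ*dM. \<Sum>i<dX. \<Sum>j<dX. H a b i (p div dM) (p mod dM) j (q div dM) (q mod dM))"
    using xy by (simp add: kraus_def lhs_b)
  also have "\<dots> = (\<Sum>a<pa. \<Sum>b<pb. (Lop dXo dX dZ dM dZo (E a) (F b) * \<tau> * adj (Lop dXo dX dZ dM dZo (E a) (F b))) $$ (row,col))"
    unfolding rhs_ab by (rule sum.swap)
  also have "\<dots> = (\<Sum>k<pa*pb. (Lop dXo dX dZ dM dZo (E (k div pb)) (F (k mod pb)) * \<tau> * adj (Lop dXo dX dZ dM dZo (E (k div pb)) (F (k mod pb)))) $$ (row,col))"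
    unfolding sum_split_nat by (intro sum.cong refl) auto
  also have "\<dots> = kraus (dXo*dZo) (pa*pb) (\<lambda>k. Lop dXo dX dZ dM dZo (E (k div pb)) (F (k mod pb))) \<tau> $$ (row,col)"
    using rc by (simp add: kraus_def)
  finally show "choi_supermap dX dZ dXo dZo R \<tau> $$ (row,col) = kraus (dXo*dZo) (pa*pb) (\<lambda>k. Lop dXo dX dZ dM dZo (E (k div pb)) (F (k mod pb))) \<tau> $$ (row,col)" .
qed (auto simp: kraus_def choi_supermap_def choi_def)



lemma kraus_lin:
  assumes K: "\<And>k. K k \<in> carrier_mat m n"
  shows "lin_map n m (kraus m p K)"
  unfolding lin_map_def
proof (intro conjI ballI allI)
  fix A B :: "complex mat" assume A: "A \<in> carrier_mat n n" and B: "B \<in> carrier_mat n n"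
  show "kraus m p K (A + B) = kraus m p K A + kraus m p K B"
  proof (rule eq_matI)
    fix r s assume "r < dim_row (kraus m p K A + kraus m p K B)" "s < dim_col (kraus m p K A + kraus m p K B)"
    hence rs: "r < m" "s < m" by (auto simp: kraus_def)
    have "(K k * (A + B) * adj (K k)) $$ (r,s) = (K k * A * adj (K k)) $$ (r,s) + (K k * B * adj (K k)) $$ (r,s)" for k
      unfolding triple_entry[OF K add_carrier_mat[OF B] rs] triple_entry[OF K A rs] triple_entry[OF K B rs]
      using A B by (simp add: distrib_left distrib_right sum.distrib)
    thus "kraus m p K (A + B) $$ (r,s) = (kraus m p K A + kraus m p K B) $$ (r,s)"
      using rs by (simp add: kraus_def sum.distrib)
  qed (auto simp: kraus_def)
next
  fix c and A :: "complex mat" assume A: "A \<in> carrier_mat n n"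
  show "kraus m p K (c \<cdot>\<^sub>m A) = c \<cdot>\<^sub>m kraus m p K A"
  proof (rule eq_matI)
    fix r s assume "r < dim_row (c \<cdot>\<^sub>m kraus m p K A)" "s < dim_col (c \<cdot>\<^sub>m kraus m p K A)"
    hence rs: "r < m" "s < m" by (auto simp: kraus_def)
    have "(K k * (c \<cdot>\<^sub>m A) * adj (K k)) $$ (r,s) = c * (K k * A * adj (K k)) $$ (r,s)" for k
      unfolding triple_entry[OF K smult_carrier_mat[OF A] rs] triple_entry[OF K A rs]
      using A by (simp add: sum_distrib_left mult_ac)
    thus "kraus m p K (c \<cdot>\<^sub>m A) $$ (r,s) = (c \<cdot>\<^sub>m kraus m p K A) $$ (r,s)"
      using rs by (simp add: kraus_def sum_distrib_left)
  qed (auto simp: kraus_def)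
qed simp

lemma choi_psd_of_kraus:
  assumes K: "\<And>k. K k \<in> carrier_mat m n" and N: "\<forall>A\<in>carrier_mat n n. N A = kraus m p K A"
  shows "psd (n*m) (choi n m N)"
proof (rule psd_gram[where K="{..<p}" and c="\<lambda>_. 1" and f="\<lambda>k a. K k $$ (a mod m, a div m)"])
  fix a b assume ab: "a < n*m" "b < n*m"
  have M0: "m > 0" using ab by (cases m) auto
  have d: "a div m < n" "b div m < n" "a mod m < m" "b mod m < m" using ab M0 by (auto simp: less_mult_imp_div_less)
  have "choi n m N $$ (a,b) = N (munit n (a div m) (b div m)) $$ (a mod m, b mod m)"
    using ab by (simp add: choi_def)
  also have "\<dots> = (\<Sum>k<p. (K k * munit n (a div m) (b div m) * adj (K k)) $$ (a mod m, b mod m))"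
    using N d by (simp add: kraus_def)
  also have "\<dots> = (\<Sum>k\<in>{..<p}. complex_of_real 1 * K k $$ (a mod m, a div m) * cnj (K k $$ (b mod m, b div m)))"
    by (intro sum.cong refl) (simp add: kraus_munit_entry[OF K d(1,2) d(3,4)])
  finally show "choi n m N $$ (a,b) = (\<Sum>k\<in>{..<p}. complex_of_real 1 * K k $$ (a mod m, a div m) * cnj (K k $$ (b mod m, b div m)))" .
qed (auto simp: choi_def)

lemma choi_cong: "(\<And>A. A \<in> carrier_mat n n \<Longrightarrow> N1 A = N2 A) \<Longrightarrow> choi n m N1 = choi n m N2"
  unfolding choi_def by (intro eq_matI) (auto simp: less_mult_imp_div_less)

lemma choi_inv_choi:
  assumes N: "lin_map n m N" and A: "A \<in> carrier_mat n n"
  shows "choi_inv n m (choi n m N) A = N A"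
proof -
  have "choi_inv n m (choi n m N) A = mat m m (\<lambda>(r,s). \<Sum>i<n. \<Sum>j<n. A $$ (i,j) * N (munit n i j) $$ (r,s))"
    unfolding choi_inv_def by (intro eq_matI) (auto intro!: sum.cong simp: choi_index)
  also have "\<dots> = N A" by (rule lin_expand[OF N A, symmetric])
  finally show ?thesis .
qed

lemma tensor_id_cong: "(\<And>A. A \<in> carrier_mat n n \<Longrightarrow> N1 A = N2 A) \<Longrightarrow> tensor_id n m k N1 X = tensor_id n m k N2 X"
  unfolding tensor_id_def by (intro eq_matI) auto

lemma mat_inv_eq:
  assumes A: "A \<in> carrier_mat n n" and B: "B \<in> carrier_mat n n" and AB: "A * B = 1\<^sub>m n" and BA: "B * A = 1\<^sub>m n"
  shows "mat_inv n A = B"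
proof -
  have uniq: "C = B" if C: "C \<in> carrier_mat n n" "A * C = 1\<^sub>m n" "C * A = 1\<^sub>m n" for C
  proof -
    have "C = C * (A * B)" using C AB by simp
    also have "\<dots> = (C * A) * B" using C(1) A B by (simp add: assoc_mult_mat[of _ n n _ n _ n])
    also have "\<dots> = B" unfolding C(3) using B by simp
    finally show ?thesis .
  qed
  show ?thesis unfolding mat_inv_def
    by (rule the_equality) (use B AB BA in simp, use uniq in blast)
qed

lemma invertible_inv:
  assumes A: "A \<in> carrier_mat n n" and inv: "invertible_mat A"
  shows "\<exists>Q. Q \<in> carrier_mat n n \<and> A * Q = 1\<^sub>m n \<and> Q * A = 1\<^sub>m n"
proof -
  from inv obtain B where AB: "A * B = 1\<^sub>m (dim_row A)" and BA: "B * A = 1\<^sub>m (dim_row B)"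
    unfolding invertible_mat_def inverts_mat_def by blast
  have "dim_col B = n" using arg_cong[OF AB, of dim_col] A by simp
  moreover have "dim_row B = n" using arg_cong[OF BA, of dim_col] A by simp
  ultimately have "B \<in> carrier_mat n n" by auto
  thus ?thesis using AB BA A by auto
qed



lemma kraus_mult:
  assumes A: "A \<in> carrier_mat m m'" and K: "\<And>k. K k \<in> carrier_mat m' n" and Y: "Y \<in> carrier_mat n n"
  shows "A * kraus m' p K Y * adj A = kraus m p (\<lambda>k. A * K k) Y"
proof (rule eq_matI)
  fix r s assume "r < dim_row (kraus m p (\<lambda>k. A * K k) Y)" "s < dim_col (kraus m p (\<lambda>k. A * K k) Y)"
  hence rs: "r < m" "s < m" by (auto simp: kraus_def)
  define X where "X k = K k * Y * adj (K k)" for k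
  have Xc: "X k \<in> carrier_mat m' m'" for k unfolding X_def using K[of k] Y by (intro mult_carrier_mat[of _ m' n] adj_carrier) auto
  have "(A * kraus m' p K Y * adj A) $$ (r,s) = (\<Sum>u<m'. \<Sum>v<m'. A $$ (r,u) * kraus m' p K Y $$ (u,v) * cnj (A $$ (s,v)))"
    by (rule triple_entry[OF A kraus_carrier rs])
  also have "\<dots> = (\<Sum>u<m'. \<Sum>v<m'. \<Sum>k<p. A $$ (r,u) * X k $$ (u,v) * cnj (A $$ (s,v)))"
    by (intro sum.cong refl) (simp add: kraus_def X_def sum_distrib_left sum_distrib_right)
  also have "\<dots> = (\<Sum>u<m'. \<Sum>k<p. \<Sum>v<m'. A $$ (r,u) * X k $$ (u,v) * cnj (A $$ (s,v)))"
    by (rule sum.cong[OF refl], rule sum.swap)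
  also have "\<dots> = (\<Sum>k<p. \<Sum>u<m'. \<Sum>v<m'. A $$ (r,u) * X k $$ (u,v) * cnj (A $$ (s,v)))"
    by (rule sum.swap)
  also have "\<dots> = (\<Sum>k<p. (A * X k * adj A) $$ (r,s))"
    by (intro sum.cong refl) (rule triple_entry[OF A Xc rs, symmetric])
  also have "\<dots> = (\<Sum>k<p. ((A * K k) * Y * adj (A * K k)) $$ (r,s))"
  proof (intro sum.cong refl)
    fix k
    have Kk: "K k \<in> carrier_mat m' n" by (rule K)
    have c1: "K k * Y \<in> carrier_mat m' n" using Kk Y by simp
    have c3: "A * K k * Y \<in> carrier_mat m n" using A Kk Y by simp
    have aK: "adj (K k) \<in> carrier_mat n m'" using Kk by simp
    have aA: "adj A \<in> carrier_mat m' m" using A by simp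
    have "A * X k * adj A = A * (K k * Y) * adj (K k) * adj A"
      unfolding X_def by (simp add: assoc_mult_mat[OF A c1 aK])
    also have "\<dots> = A * K k * Y * adj (K k) * adj A" by (simp add: assoc_mult_mat[OF A Kk Y])
    also have "\<dots> = (A * K k) * Y * (adj (K k) * adj A)" by (rule assoc_mult_mat[OF c3 aK aA])
    also have "\<dots> = (A * K k) * Y * adj (A * K k)" by (simp add: adj_mult[OF A Kk])
    finally have "A * X k * adj A = (A * K k) * Y * adj (A * K k)" .
    thus "(A * X k * adj A) $$ (r,s) = ((A * K k) * Y * adj (A * K k)) $$ (r,s)" by simp
  qed
  also have "\<dots> = kraus m p (\<lambda>k. A * K k) Y $$ (r,s)" using rs by (simp add: kraus_def)
  finally show "(A * kraus m' p K Y * adj A) $$ (r,s) = kraus m p (\<lambda>k. A * K k) Y $$ (r,s)" .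
qed (use A in \<open>auto simp: kraus_def\<close>)

lemma kraus_conj_in:
  assumes B: "B \<in> carrier_mat n' n" and X: "X \<in> carrier_mat n n" and K: "\<And>k. K k \<in> carrier_mat m n'"
  shows "kraus m p K (B * X * adj B) = kraus m p (\<lambda>k. K k * B) X"
proof -
  have "K k * (B * X * adj B) * adj (K k) = (K k * B) * X * adj (K k * B)" for k
  proof -
    have Kk: "K k \<in> carrier_mat m n'" by (rule K)
    have c1: "B * X \<in> carrier_mat n' n" using B X by simp
    have c3: "K k * B * X \<in> carrier_mat m n" using Kk B X by simp
    have aK: "adj (K k) \<in> carrier_mat n' m" using Kk by simp
    have aB: "adj B \<in> carrier_mat n n'" using B by simp
    have "K k * (B * X * adj B) * adj (K k) = K k * (B * X) * adj B * adj (K k)"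
      by (simp add: assoc_mult_mat[OF Kk c1 aB])
    also have "\<dots> = K k * B * X * adj B * adj (K k)" by (simp add: assoc_mult_mat[OF Kk B X])
    also have "\<dots> = (K k * B) * X * (adj B * adj (K k))" by (rule assoc_mult_mat[OF c3 aB aK])
    also have "\<dots> = (K k * B) * X * adj (K k * B)" by (simp add: adj_mult[OF Kk B])
    finally show ?thesis .
  qed
  thus ?thesis unfolding kraus_def by simp
qed

lemma kraus_zero_tail:
  assumes pd: "p \<le> d" and Z: "\<And>k. p \<le> k \<Longrightarrow> K k = 0\<^sub>m m n" and X: "X \<in> carrier_mat n n"
  shows "kraus m d K X = kraus m p K X"
proof -
  have "(\<Sum>k<d. (K k * X * adj (K k)) $$ (r,s)) = (\<Sum>k<p. (K k * X * adj (K k)) $$ (r,s))" if rs: "r < m" "s < m" for r s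
  proof (rule sum.mono_neutral_right)
    show "\<forall>k\<in>{..<d} - {..<p}. (K k * X * adj (K k)) $$ (r,s) = 0"
    proof
      fix k assume "k \<in> {..<d} - {..<p}"
      hence "K k = 0\<^sub>m m n" using Z by auto
      thus "(K k * X * adj (K k)) $$ (r,s) = 0" using X rs by (simp add: triple_entry)
    qed
  qed (use pd in auto)
  thus ?thesis unfolding kraus_def by (intro eq_matI) auto
qed

lemma VXV:
  assumes V: "V \<in> carrier_mat m (n*d)" and X: "X \<in> carrier_mat n n"
  shows "V * kron X (1\<^sub>m d) * adj V = kraus m d (\<lambda>k. mat m n (\<lambda>(a,i). V $$ (a, i*d + k))) X"
proof (rule eq_matI)
  fix r s assume "r < dim_row (kraus m d (\<lambda>k. mat m n (\<lambda>(a,i). V $$ (a, i*d + k))) X)"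
     "s < dim_col (kraus m d (\<lambda>k. mat m n (\<lambda>(a,i). V $$ (a, i*d + k))) X)"
  hence rs: "r < m" "s < m" by (auto simp: kraus_def)
  define Vk where "Vk k = mat m n (\<lambda>(a,i). V $$ (a, i*d + k))" for k
  have Vkc: "Vk k \<in> carrier_mat m n" for k by (simp add: Vk_def)
  have Kc: "kron X (1\<^sub>m d) \<in> carrier_mat (n*d) (n*d)" using X by (simp add: kron_def)
  have kr: "kron X (1\<^sub>m d) $$ (i*d+k, j*d+l) = X $$ (i,j) * (if k = l then 1 else 0)" 
    if "i < n" "j < n" "k < d" "l < d" for i j k l
    using that X by (simp add: kron_def idx_bound)
  have "(V * kron X (1\<^sub>m d) * adj V) $$ (r,s) = (\<Sum>c<n*d. \<Sum>c'<n*d. V $$ (r,c) * kron X (1\<^sub>m d) $$ (c,c') * cnj (V $$ (s,c')))"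
    by (rule triple_entry[OF V Kc rs])
  also have "\<dots> = (\<Sum>i<n. \<Sum>k<d. \<Sum>j<n. \<Sum>l<d. V $$ (r,i*d+k) * kron X (1\<^sub>m d) $$ (i*d+k,j*d+l) * cnj (V $$ (s,j*d+l)))"
    unfolding sum_split_nat ..
  also have "\<dots> = (\<Sum>i<n. \<Sum>k<d. \<Sum>j<n. V $$ (r,i*d+k) * X $$ (i,j) * cnj (V $$ (s,j*d+k)))"
  proof (intro sum.cong refl)
    fix i k j assume ikj: "i \<in> {..<n}" "k \<in> {..<d}" "j \<in> {..<n}"
    have "(\<Sum>l<d. V $$ (r,i*d+k) * kron X (1\<^sub>m d) $$ (i*d+k,j*d+l) * cnj (V $$ (s,j*d+l))) =
      (\<Sum>l<d. if l = k then V $$ (r,i*d+k) * X $$ (i,j) * cnj (V $$ (s,j*d+k)) else 0)"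
      using ikj by (intro sum.cong refl) (auto simp: kr)
    thus "(\<Sum>l<d. V $$ (r,i*d+k) * kron X (1\<^sub>m d) $$ (i*d+k,j*d+l) * cnj (V $$ (s,j*d+l))) = 
      V $$ (r,i*d+k) * X $$ (i,j) * cnj (V $$ (s,j*d+k))" using ikj by simp
  qed
  also have "\<dots> = (\<Sum>k<d. \<Sum>i<n. \<Sum>j<n. V $$ (r,i*d+k) * X $$ (i,j) * cnj (V $$ (s,j*d+k)))"
    by (rule sum.swap)
  also have "\<dots> = (\<Sum>k<d. (Vk k * X * adj (Vk k)) $$ (r,s))"
    by (intro sum.cong refl) (subst triple_entry[OF Vkc X rs], use rs in \<open>auto intro!: sum.cong simp: Vk_def\<close>)
  also have "\<dots> = kraus m d Vk X $$ (r,s)" using rs by (simp add: kraus_def)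
  finally show "(V * kron X (1\<^sub>m d) * adj V) $$ (r,s) = kraus m d (\<lambda>k. mat m n (\<lambda>(a,i). V $$ (a, i*d + k))) X $$ (r,s)"
    unfolding Vk_def .
qed (use V in \<open>auto simp: kraus_def kron_def\<close>)

lemma kron_one_one: "kron (1\<^sub>m n) (1\<^sub>m d) = 1\<^sub>m (n*d)"
proof (rule eq_matI)
  fix i j assume "i < dim_row (1\<^sub>m (n*d))" "j < dim_col (1\<^sub>m (n*d))"
  hence ij: "i < n*d" "j < n*d" by auto
  have d0: "d > 0" using ij by (cases d) auto
  have "i div d < n" "j div d < n" using ij by (auto simp: less_mult_imp_div_less)
  moreover have "(i div d = j div d \<and> i mod d = j mod d) = (i = j)" by (metis div_mult_mod_eq)
  ultimately show "kron (1\<^sub>m n) (1\<^sub>m d) $$ (i,j) = 1\<^sub>m (n*d) $$ (i,j)"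
    using ij d0 by (auto simp: kron_def)
qed (auto simp: kron_def)

lemma ptrace_kraus:
  assumes K: "\<And>k. K k \<in> carrier_mat (a*b) n" and X: "X \<in> carrier_mat n n"
  shows "ptrace2 a b (kraus (a*b) p K X) = kraus a (p*b) (\<lambda>k'. mat a n (\<lambda>(z,i). K (k' div b) $$ (z*b + k' mod b, i))) X"
proof (rule eq_matI)
  fix z z' assume "z < dim_row (kraus a (p*b) (\<lambda>k'. mat a n (\<lambda>(z,i). K (k' div b) $$ (z*b + k' mod b, i))) X)"
    "z' < dim_col (kraus a (p*b) (\<lambda>k'. mat a n (\<lambda>(z,i). K (k' div b) $$ (z*b + k' mod b, i))) X)"
  hence zz: "z < a" "z' < a" by (auto simp: kraus_def)
  define K' where "K' k' = mat a n (\<lambda>(z,i). K (k' div b) $$ (z*b + k' mod b, i))" for k'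
  have K'c: "K' k' \<in> carrier_mat a n" for k' by (simp add: K'_def)
  have "ptrace2 a b (kraus (a*b) p K X) $$ (z,z') = (\<Sum>\<alpha><b. \<Sum>k<p. \<Sum>i<n. \<Sum>j<n. K k $$ (z*b+\<alpha>, i) * X $$ (i,j) * cnj (K k $$ (z'*b+\<alpha>, j)))"
    using zz by (simp add: ptrace2_def kraus_def idx_bound triple_entry[OF K X])
  also have "\<dots> = (\<Sum>k<p. \<Sum>\<alpha><b. \<Sum>i<n. \<Sum>j<n. K k $$ (z*b+\<alpha>, i) * X $$ (i,j) * cnj (K k $$ (z'*b+\<alpha>, j)))"
    by (rule sum.swap)
  also have "\<dots> = (\<Sum>k'<p*b. (K' k' * X * adj (K' k')) $$ (z,z'))"
    unfolding sum_split_nat using zz by (intro sum.cong refl) (subst triple_entry[OF K'c X zz], simp add: K'_def)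
  also have "\<dots> = kraus a (p*b) K' X $$ (z,z')" using zz by (simp add: kraus_def)
  finally show "ptrace2 a b (kraus (a*b) p K X) $$ (z,z') = kraus a (p*b) (\<lambda>k'. mat a n (\<lambda>(z,i). K (k' div b) $$ (z*b + k' mod b, i))) X $$ (z,z')"
    unfolding K'_def .
qed (auto simp: kraus_def ptrace2_def)



lemma lin_map_cong:
  assumes N: "lin_map n m N1" and eq: "\<And>A. A \<in> carrier_mat n n \<Longrightarrow> N2 A = N1 A"
  shows "lin_map n m N2"
  using N unfolding lin_map_def by (simp add: eq)

lemma kraus_cong: "(\<And>k. k < p \<Longrightarrow> K1 k = K2 k) \<Longrightarrow> kraus m p K1 X = kraus m p K2 X"
  unfolding kraus_def by (intro eq_matI) auto

lemma kraus_of_cptp: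
  assumes "lin_map n m N" "completely_positive n m N"
  shows "\<exists>p K. (\<forall>k. K k \<in> carrier_mat m n) \<and> (\<forall>A\<in>carrier_mat n n. N A = kraus m p K A)"
  using kraus_from_choi[OF assms(1) choi_psd_of_cp[OF assms]] by blast

lemma assoc5:
  assumes r: "r \<in> carrier_mat m m" and V: "V \<in> carrier_mat m k" and K: "K \<in> carrier_mat k k" and W: "W \<in> carrier_mat k m"
  shows "r * V * K * W * r = r * (V * K * W) * r"
proof -
  have "r * V * K * W = r * (V * K * W)"
    using r V K W by (simp add: assoc_mult_mat[of _ m m _ k _ k] assoc_mult_mat[of _ m k _ k _ m] assoc_mult_mat[of _ m k _ k _ k]
      assoc_mult_mat[of r m m "V * K" k W m] assoc_mult_mat[of V m k "K" k W m])
  thus ?thesis by simp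
qed

lemma sandwich:
  assumes r: "r \<in> carrier_mat m m" and ri: "ri \<in> carrier_mat m m" and M: "M \<in> carrier_mat m m" and ari: "ari \<in> carrier_mat m m"
  shows "r * (ri * M * ari) * r = (r * ri) * M * (ari * r)"
  using r ri M ari by (simp add: assoc_mult_mat[of _ m m _ m _ m])



theorem lemma2:
  fixes dX dZ dA :: nat
    and \<Gamma> :: "complex mat \<Rightarrow> complex mat"
    and \<R> :: "(complex mat \<Rightarrow> complex mat) \<Rightarrow> (complex mat \<Rightarrow> complex mat)"
  assumes dims: "0 < dX" "0 < dZ" "0 < dA"
    and Gamma: "CPTP dX (dZ * dA) \<Gamma>"
    and full1: "invertible_mat (choi dX (dZ * dA) \<Gamma>)"
    and full2: "invertible_mat (choi dX dZ (\<lambda>A. ptrace2 dZ dA (\<Gamma> A)))"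
    and R: "superchannel dX dZ dX (dZ * dA) \<R>"
    and recov: "\<forall>A \<in> carrier_mat dX dX. \<R> (\<lambda>B. ptrace2 dZ dA (\<Gamma> B)) A = \<Gamma> A"
  shows "\<exists>dR V. dR \<ge> dA \<and> V \<in> carrier_mat (dX * dZ * dA) (dX * dZ * dR) \<and>
           V * adj V = 1\<^sub>m (dX * dZ * dA) \<and>
           (\<forall>\<tau> \<in> carrier_mat (dX * dZ) (dX * dZ).
              choi_supermap dX dZ dX (dZ * dA) \<R> \<tau> =
                mat_sqrt (dX * (dZ * dA)) (choi dX (dZ * dA) \<Gamma>) * V *
                kron (mat_inv (dX * dZ) (mat_sqrt (dX * dZ) (choi dX dZ (\<lambda>A. ptrace2 dZ dA (\<Gamma> A))))
                      * \<tau> *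
                      mat_inv (dX * dZ) (mat_sqrt (dX * dZ) (choi dX dZ (\<lambda>A. ptrace2 dZ dA (\<Gamma> A)))))
                     (1\<^sub>m dR) *
                adj V * mat_sqrt (dX * (dZ * dA)) (choi dX (dZ * dA) \<Gamma>)) \<and>
           (supermap_rank dX dZ dX (dZ * dA) \<R> = dA \<longrightarrow>
              dR = dA \<and> adj V * V = 1\<^sub>m (dX * dZ * dR) \<and> V * adj V = 1\<^sub>m (dX * dZ * dA))"

proof -
  have mm: "dX * dZ * dA = dX * (dZ * dA)" by (simp add: mult.assoc)
  define n where "n = dX * dZ"
  define m where "m = dX * (dZ * dA)"
  define Sg where "Sg = (\<lambda>A. ptrace2 dZ dA (\<Gamma> A))"
  define \<rho> where "\<rho> = choi dX (dZ * dA) \<Gamma>"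
  define \<sigma> where "\<sigma> = choi dX dZ Sg"
  define \<Phi> where "\<Phi> = choi_supermap dX dZ dX (dZ * dA) \<R>"
  have linG: "lin_map dX (dZ * dA) \<Gamma>" and cpG: "completely_positive dX (dZ * dA) \<Gamma>"
    using Gamma by (auto simp: CPTP_def)
  have \<rho>psd: "psd m \<rho>" unfolding \<rho>_def m_def by (rule choi_psd_of_cp[OF linG cpG])
  obtain pG KG where KG: "\<And>k. KG k \<in> carrier_mat (dZ * dA) dX" and GK: "\<forall>A\<in>carrier_mat dX dX. \<Gamma> A = kraus (dZ * dA) pG KG A"
    using kraus_of_cptp[OF linG cpG] by blast
  define KS where "KS k' = mat dZ dX (\<lambda>(z,i). KG (k' div dA) $$ (z*dA + k' mod dA, i))" for k'
  have KSc: "\<And>k. KS k \<in> carrier_mat dZ dX" by (simp add: KS_def)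
  have SK: "\<forall>A\<in>carrier_mat dX dX. Sg A = kraus dZ (pG*dA) KS A"
    unfolding Sg_def KS_def using GK ptrace_kraus[OF KG] by simp
  have linS: "lin_map dX dZ Sg" by (rule lin_map_cong[OF kraus_lin[OF KSc]]) (use SK in simp)
  have \<sigma>psd: "psd n \<sigma>" unfolding \<sigma>_def n_def by (rule choi_psd_of_kraus[OF KSc SK])
  obtain dM Epre Epost where Epre: "CPTP dX (dX * dM) Epre" and Epost: "CPTP (dZ * dM) (dZ * dA) Epost"
    and RR: "\<forall>N. lin_map dX dZ N \<longrightarrow> (\<forall>A \<in> carrier_mat dX dX. \<R> N A = Epost (tensor_id dX dZ dM N (Epre A)))"
    using R unfolding superchannel_def by blast
  obtain pa E where E: "\<And>k. E k \<in> carrier_mat (dX * dM) dX" and EK: "\<forall>A\<in>carrier_mat dX dX. Epre A = kraus (dX * dM) pa E A"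
    using kraus_of_cptp[of dX "dX * dM" Epre] Epre by (auto simp: CPTP_def)
  obtain pb F where F: "\<And>k. F k \<in> carrier_mat (dZ * dA) (dZ * dM)" and FK: "\<forall>B\<in>carrier_mat (dZ * dM) (dZ * dM). Epost B = kraus (dZ * dA) pb F B"
    using kraus_of_cptp[of "dZ * dM" "dZ * dA" Epost] Epost by (auto simp: CPTP_def)
  define L where "L k = Lop dX dX dZ dM (dZ * dA) (E (k div pb)) (F (k mod pb))" for k
  have Lc: "\<And>k. L k \<in> carrier_mat m n" unfolding L_def m_def n_def by simp
  have \<Phi>K: "\<forall>\<tau>\<in>carrier_mat n n. \<Phi> \<tau> = kraus m (pa*pb) L \<tau>"
    unfolding \<Phi>_def L_def m_def n_def using supermap_kraus[OF E F EK FK RR] by blast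
  have lin\<Phi>: "lin_map n m \<Phi>" by (rule lin_map_cong[OF kraus_lin[OF Lc]]) (use \<Phi>K in simp)
  have \<Phi>psd: "psd (n*m) (choi n m \<Phi>)" by (rule choi_psd_of_kraus[OF Lc \<Phi>K])
  obtain p L' where L'c: "\<forall>k. L' k \<in> carrier_mat m n" and \<Phi>K': "\<forall>\<tau>\<in>carrier_mat n n. \<Phi> \<tau> = kraus m p L' \<tau>"
    and prank: "p \<le> vec_space.rank (n*m) (choi n m \<Phi>)"
    using kraus_from_choi[OF lin\<Phi> \<Phi>psd] by blast
  have prank': "p \<le> supermap_rank dX dZ dX (dZ * dA) \<R>"
    using prank unfolding supermap_rank_def \<Phi>_def n_def m_def .
  have \<Phi>\<sigma>: "\<Phi> \<sigma> = \<rho>"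
  proof -
    have "\<R> (choi_inv dX dZ \<sigma>) A = \<Gamma> A" if A: "A \<in> carrier_mat dX dX" for A
    proof -
      have "\<R> (choi_inv dX dZ \<sigma>) A = Epost (tensor_id dX dZ dM (choi_inv dX dZ \<sigma>) (Epre A))"
        using RR choi_inv_lin A by blast
      also have "\<dots> = Epost (tensor_id dX dZ dM Sg (Epre A))"
        unfolding \<sigma>_def by (intro arg_cong[where f=Epost] tensor_id_cong choi_inv_choi[OF linS])
      also have "\<dots> = \<R> Sg A" using RR linS A by simp
      also have "\<dots> = \<Gamma> A" using recov A unfolding Sg_def by simp
      finally show ?thesis .
    qed
    thus ?thesis unfolding \<Phi>_def choi_supermap_def \<rho>_def by (intro choi_cong) simp
  qed
  define s where "s = mat_sqrt n \<sigma>"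
  define r where "r = mat_sqrt m \<rho>"
  have spsd: "psd n s" and ss: "s * s = \<sigma>" using mat_sqrt[OF \<sigma>psd] by (auto simp: s_def)
  have rpsd: "psd m r" and rr: "r * r = \<rho>" using mat_sqrt[OF \<rho>psd] by (auto simp: r_def)
  have sc: "s \<in> carrier_mat n n" using spsd by (simp add: psd_def)
  have rc: "r \<in> carrier_mat m m" using rpsd by (simp add: psd_def)
  have sh: "adj s = s" by (rule psd_herm[OF spsd])
  have rh: "adj r = r" by (rule psd_herm[OF rpsd])
  have \<sigma>c: "\<sigma> \<in> carrier_mat n n" by (simp add: \<sigma>_def n_def choi_def)
  have \<rho>c: "\<rho> \<in> carrier_mat m m" by (simp add: \<rho>_def m_def choi_def)
  obtain Qs where Qs: "Qs \<in> carrier_mat n n" "\<sigma> * Qs = 1\<^sub>m n" "Qs * \<sigma> = 1\<^sub>m n"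
    using invertible_inv[OF \<sigma>c] full2 unfolding \<sigma>_def Sg_def by blast
  obtain Qr where Qr: "Qr \<in> carrier_mat m m" "\<rho> * Qr = 1\<^sub>m m" "Qr * \<rho> = 1\<^sub>m m"
    using invertible_inv[OF \<rho>c] full1 unfolding \<rho>_def by blast
  define si where "si = s * Qs"
  define ri where "ri = r * Qr"
  have sic: "si \<in> carrier_mat n n" using sc Qs by (simp add: si_def)
  have ric: "ri \<in> carrier_mat m m" using rc Qr by (simp add: ri_def)
  have s_si: "s * si = 1\<^sub>m n" unfolding si_def using sc Qs ss by (simp add: assoc_mult_mat[of _ n n _ n _ n, symmetric])
  have si_s: "si * s = 1\<^sub>m n" using mat_mult_left_right_inverse[OF sc sic s_si] .
  have r_ri: "r * ri = 1\<^sub>m m" unfolding ri_def using rc Qr rr by (simp add: assoc_mult_mat[of _ m m _ m _ m, symmetric])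
  have ri_r: "ri * r = 1\<^sub>m m" using mat_mult_left_right_inverse[OF rc ric r_ri] .
  have ari_r: "adj ri * r = 1\<^sub>m m"
  proof -
    have "adj ri * r = adj ri * adj r" using rh by simp
    also have "\<dots> = adj (r * ri)" using rc ric by (simp add: adj_mult)
    finally show ?thesis using r_ri by simp
  qed
  have r_ari: "r * adj ri = 1\<^sub>m m"
  proof -
    have "r * adj ri = adj r * adj ri" using rh by simp
    also have "\<dots> = adj (ri * r)" using rc ric by (simp add: adj_mult)
    finally show ?thesis using ri_r by simp
  qed
  have minv: "mat_inv (dX * dZ) (mat_sqrt (dX * dZ) (choi dX dZ (\<lambda>A. ptrace2 dZ dA (\<Gamma> A)))) = si"
    using mat_inv_eq[OF sc sic s_si si_s] unfolding s_def \<sigma>_def Sg_def n_def .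
  have rdef: "mat_sqrt (dX * (dZ * dA)) (choi dX (dZ * dA) \<Gamma>) = r" unfolding r_def \<rho>_def m_def ..
  define dR where "dR = max p dA"
  have pdR: "p \<le> dR" and dAdR: "dA \<le> dR" by (auto simp: dR_def)
  define Vk where "Vk k = (if k < p then ri * L' k * s else 0\<^sub>m m n)" for k
  have Vkc: "Vk k \<in> carrier_mat m n" for k using ric L'c sc by (auto simp: Vk_def)
  define V where "V = mat m (n * dR) (\<lambda>(a,c). Vk (c mod dR) $$ (a, c div dR))"
  have Vc: "V \<in> carrier_mat m (n * dR)" by (simp add: V_def)
  have Vblocks: "mat m n (\<lambda>(a,i). V $$ (a, i*dR + k)) = Vk k" if k: "k < dR" for k
    using k Vkc[of k] by (intro eq_matI) (auto simp: V_def idx_bound)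
  have VKV: "V * kron X (1\<^sub>m dR) * adj V = ri * \<Phi> (s * X * s) * adj ri" if X: "X \<in> carrier_mat n n" for X
  proof -
    have sXs: "s * X * s \<in> carrier_mat n n" using sc X by simp
    have "V * kron X (1\<^sub>m dR) * adj V = kraus m dR Vk X"
      unfolding VXV[OF Vc X] by (rule kraus_cong) (simp add: Vblocks)
    also have "\<dots> = kraus m p Vk X" by (rule kraus_zero_tail[OF pdR _ X]) (simp add: Vk_def)
    also have "\<dots> = kraus m p (\<lambda>k. ri * (L' k * s)) X"
      by (rule kraus_cong) (simp add: Vk_def assoc_mult_mat[OF ric _ sc] L'c)
    also have "\<dots> = ri * kraus m p (\<lambda>k. L' k * s) X * adj ri"
      by (rule kraus_mult[symmetric, OF ric _ X], rule mult_carrier_mat[OF _ sc]) (use L'c in simp)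
    also have "kraus m p (\<lambda>k. L' k * s) X = kraus m p L' (s * X * adj s)"
      by (rule kraus_conj_in[symmetric, OF sc X]) (use L'c in simp)
    also have "\<dots> = \<Phi> (s * X * s)" using \<Phi>K' sXs sh by simp
    finally show ?thesis .
  qed
  have VV: "V * adj V = 1\<^sub>m m"
  proof -
    have "V * adj V = V * kron (1\<^sub>m n) (1\<^sub>m dR) * adj V" unfolding kron_one_one using Vc by simp
    also have "\<dots> = ri * \<Phi> (s * 1\<^sub>m n * s) * adj ri" by (rule VKV) simp
    also have "s * 1\<^sub>m n * s = \<sigma>" using sc ss by simp
    also have "ri * \<Phi> \<sigma> * adj ri = ri * r * (r * adj ri)"
      unfolding \<Phi>\<sigma> rr[symmetric] using ric rc by (simp add: assoc_mult_mat[of _ m m _ m _ m])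
    also have "\<dots> = 1\<^sub>m m" using ri_r r_ari by simp
    finally show ?thesis .
  qed
  have formula: "\<Phi> \<tau> = r * V * kron (si * \<tau> * si) (1\<^sub>m dR) * adj V * r" if \<tau>: "\<tau> \<in> carrier_mat n n" for \<tau>
  proof -
    have X: "si * \<tau> * si \<in> carrier_mat n n" using sic \<tau> by simp
    have Kc: "kron (si * \<tau> * si) (1\<^sub>m dR) \<in> carrier_mat (n * dR) (n * dR)" using X carrier_matD[OF sic] by (simp add: kron_def)
    have "r * V * kron (si * \<tau> * si) (1\<^sub>m dR) * adj V * r = r * (V * kron (si * \<tau> * si) (1\<^sub>m dR) * adj V) * r"
      by (rule assoc5[OF rc Vc Kc adj_carrier[OF Vc]])
    also have "\<dots> = r * (ri * \<Phi> (s * (si * \<tau> * si) * s) * adj ri) * r" unfolding VKV[OF X] ..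
    also have "s * (si * \<tau> * si) * s = (s * si) * \<tau> * (si * s)"
      using sc sic \<tau> by (simp add: assoc_mult_mat[of _ n n _ n _ n])
    also have "\<dots> = \<tau>" using s_si si_s \<tau> by simp
    also have "r * (ri * \<Phi> \<tau> * adj ri) * r = (r * ri) * \<Phi> \<tau> * (adj ri * r)"
      by (rule sandwich[OF rc ric _ adj_carrier[OF ric]]) (use lin\<Phi> \<tau> in \<open>simp add: lin_map_def\<close>)
    also have "\<dots> = \<Phi> \<tau>" using r_ri ari_r lin\<Phi> \<tau> by (simp add: lin_map_def)
    finally show ?thesis ..
  qed
  have rankcl: "dR = dA \<and> adj V * V = 1\<^sub>m (dX * dZ * dR) \<and> V * adj V = 1\<^sub>m m"
    if rk: "supermap_rank dX dZ dX (dZ * dA) \<R> = dA"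
  proof -
    have "dR = dA" using prank' rk by (simp add: dR_def)
    hence Vc': "V \<in> carrier_mat m m" using Vc by (simp add: n_def m_def mult.assoc)
    have "adj V * V = 1\<^sub>m m" using mat_mult_left_right_inverse[OF Vc' adj_carrier[OF Vc'] VV] .
    thus ?thesis using \<open>dR = dA\<close> VV by (simp add: m_def mult.assoc)
  qed
  show ?thesis unfolding mm minv rdef
  proof (intro exI conjI)
    show "dA \<le> dR" by (rule dAdR)
    show "V \<in> carrier_mat (dX * (dZ * dA)) (dX * dZ * dR)" using Vc unfolding m_def n_def .
    show "V * adj V = 1\<^sub>m (dX * (dZ * dA))" using VV unfolding m_def .
    show "\<forall>\<tau>\<in>carrier_mat (dX * dZ) (dX * dZ). choi_supermap dX dZ dX (dZ * dA) \<R> \<tau> = r * V * kron (si * \<tau> * si) (1\<^sub>m dR) * adj V * r"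
      using formula unfolding \<Phi>_def n_def by blast
    show "supermap_rank dX dZ dX (dZ * dA) \<R> = dA \<longrightarrow> dR = dA \<and> adj V * V = 1\<^sub>m (dX * dZ * dR) \<and> V * adj V = 1\<^sub>m (dX * (dZ * dA))"
      using rankcl unfolding m_def by blast
  qed
qed


end
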